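(* Let $G$ be a discrete group, and let $I_0(G)^{\rm tw}$ denote the Banach $\ell^1(G)$-bimodule whose underlying space is $I_0(G)$, with left action induced by conjugation, $g\cdot a=e_g*a*e_{g^{-1}}$, and trivial right action $a\cdot g=a$ ($g\in G$). Then the maps $\Theta^n:C^n(\ell^1(G),I_0(G)')\to C^n(\ell^1(G),(I_0(G)^{\rm tw})')$ determined by $(\Theta^n\psi)(e_{g_1},\dots,e_{g_n})=(g_1\cdots g_n)^{-1}\cdot\psi(e_{g_1},\dots,e_{g_n})$ (the action on the right being the left action of $\ell^1(G)$ on the bimodule $I_0(G)'$) form a chain isomorphism of Banach cochain complexes, and hence $H^n(\ell^1(G),I_0(G)')\cong H^n(\ell^1(G),(I_0(G)^{\rm tw})')$ for all $n$. Moreover, with $S=G\setminus\{e\}$ regarded as a left $G$-set via conjugation, $I_0(G)^{\rm tw}\cong\ell^1(S)$ as $\ell^1(G)$-bimodules (with $\ell^1(S)$ carrying the left action induced by conjugation and trivial right action), so $H^n(\ell^1(G),I_0(G)')\cong H^n(\ell^1(G),\ell^1(S)')$ for all $n$.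
   Context: $\ell^1(G)$ is the convolution algebra of the discrete group $G$ with basis $(e_g)$; $I_0(G)$ is the kernel of the augmentation character $e_g\mapsto1$, a bimodule under multiplication. Bounded multilinear maps on $\ell^1(G)$ are determined by their values on basis elements. Hochschild cochains $C^n(A,M)$ are bounded $n$-linear maps $A^n\to M$ with the standard Hochschild coboundary; $M'$ has the adjoint bimodule structure. *)

theory Defs
  imports "HOL-Analysis.Analysis"
begin

text \<open>The discrete group G is a type of class group_add (written additively, NOT assumed
  commutative): group product g h is g + h, inverse is - g, unit is 0.\<close>

type_synonym 'g vec = "'g \<Rightarrow> complex"

definition l1 :: "('g vec) set" where
  "l1 = {f. (\<lambda>g. norm (f g)) summable_on UNIV}"

definition l1norm :: "'g vec \<Rightarrow> real" where
  "l1norm f = (\<Sum>\<^sub>\<infinity>g. norm (f g))"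

definition pt :: "'g \<Rightarrow> 'g vec" where
  "pt g = (\<lambda>x. if x = g then 1 else 0)"

definition conv :: "('g::group_add) vec \<Rightarrow> 'g vec \<Rightarrow> 'g vec" where
  "conv f h = (\<lambda>x. \<Sum>\<^sub>\<infinity>y. f y * h (- y + x))"

definition aug :: "'g vec \<Rightarrow> complex" where
  "aug f = (\<Sum>\<^sub>\<infinity>g. f g)"

definition vlin :: "complex \<Rightarrow> 'g vec \<Rightarrow> 'g vec \<Rightarrow> 'g vec" where
  "vlin c x y = (\<lambda>g. c * x g + y g)"

definition I0 :: "('g vec) set" where
  "I0 = {f \<in> l1. aug f = 0}"

text \<open>l1(S) for S = G - {e}, encoded as the l1 functions on G vanishing at e.\<close>
definition l1S_set :: "('g::group_add vec) set" where
  "l1S_set = {f \<in> l1. f 0 = 0}"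

text \<open>A Banach l1(G)-bimodule: a subspace of l1(G) (with the l1 norm) and the
  left action lact a x (a . x) and right action ract x a (x . a).\<close>
record 'g bimod =
  carr :: "'g vec set"
  lact :: "'g vec \<Rightarrow> 'g vec \<Rightarrow> 'g vec"
  ract :: "'g vec \<Rightarrow> 'g vec \<Rightarrow> 'g vec"

text \<open>Left action induced by conjugation: e_g . x = e_g * x * e_{g^{-1}}, i.e.
  (a . x)(h) = sum_g a(g) x(g^{-1} h g).\<close>
definition twl :: "('g::group_add) vec \<Rightarrow> 'g vec \<Rightarrow> 'g vec" where
  "twl a x = (\<lambda>h. \<Sum>\<^sub>\<infinity>g. a g * x (- g + h + g))"

text \<open>Trivial right action x . e_g = x, i.e. x . a = aug(a) x.\<close>
definition twr :: "'g vec \<Rightarrow> 'g vec \<Rightarrow> 'g vec" where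
  "twr x a = (\<lambda>h. aug a * x h)"

definition I0mod :: "('g::group_add) bimod" where
  "I0mod = \<lparr>carr = I0, lact = conv, ract = conv\<rparr>"

definition I0tw :: "('g::group_add) bimod" where
  "I0tw = \<lparr>carr = I0, lact = twl, ract = twr\<rparr>"

definition l1Smod :: "('g::group_add) bimod" where
  "l1Smod = \<lparr>carr = l1S_set, lact = twl, ract = twr\<rparr>"

text \<open>Dual space X': bounded linear functionals on X, normalised to vanish off X.\<close>
definition dualset :: "'g vec set \<Rightarrow> ('g vec \<Rightarrow> complex) set" where
  "dualset X = {ff.
     (\<forall>x\<in>X. \<forall>y\<in>X. \<forall>c. ff (vlin c x y) = c * ff x + ff y) \<and>
     (\<exists>K. \<forall>x\<in>X. norm (ff x) \<le> K * l1norm x) \<and>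
     (\<forall>x. x \<notin> X \<longrightarrow> ff x = 0)}"

definition dlact :: "'g bimod \<Rightarrow> 'g vec \<Rightarrow> ('g vec \<Rightarrow> complex) \<Rightarrow> ('g vec \<Rightarrow> complex)" where
  "dlact M a f = (\<lambda>x. if x \<in> carr M then f (ract M x a) else 0)"

definition dract :: "'g bimod \<Rightarrow> ('g vec \<Rightarrow> complex) \<Rightarrow> 'g vec \<Rightarrow> ('g vec \<Rightarrow> complex)" where
  "dract M f a = (\<lambda>x. if x \<in> carr M then f (lact M a x) else 0)"

text \<open>An n-cochain with values in M' is an n-linear map l1(G)^n -> M', given on
  lists of length n (and normalised to 0 on other arguments).\<close>
type_synonym 'g cochain = "'g vec list \<Rightarrow> 'g vec \<Rightarrow> complex"

definition valid :: "nat \<Rightarrow> 'g vec list \<Rightarrow> bool" where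
  "valid n as \<longleftrightarrow> length as = n \<and> set as \<subseteq> l1"

definition cbound :: "'g bimod \<Rightarrow> nat \<Rightarrow> 'g cochain \<Rightarrow> real \<Rightarrow> bool" where
  "cbound M n \<phi> K \<longleftrightarrow> (\<forall>as x. valid n as \<longrightarrow> x \<in> carr M \<longrightarrow>
      norm (\<phi> as x) \<le> K * prod_list (map l1norm as) * l1norm x)"

definition cochains :: "'g bimod \<Rightarrow> nat \<Rightarrow> 'g cochain set" where
  "cochains M n = {\<phi>.
     (\<forall>as. valid n as \<longrightarrow> \<phi> as \<in> dualset (carr M)) \<and>
     (\<forall>as. \<not> valid n as \<longrightarrow> \<phi> as = (\<lambda>_. 0)) \<and>
     (\<forall>as i a b c. valid n as \<longrightarrow> i < n \<longrightarrow> a \<in> l1 \<longrightarrow> b \<in> l1 \<longrightarrow>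
        \<phi> (as[i := vlin c a b]) = (\<lambda>x. c * \<phi> (as[i := a]) x + \<phi> (as[i := b]) x)) \<and>
     (\<exists>K. cbound M n \<phi> K)}"

text \<open>Replace a_i, a_{i+1} (1-based) by a_i * a_{i+1}.\<close>
definition merge :: "nat \<Rightarrow> ('g::group_add) vec list \<Rightarrow> 'g vec list" where
  "merge i as = take (i - 1) as @ [conv (as ! (i - 1)) (as ! i)] @ drop (i + 1) as"

definition cobound :: "('g::group_add) bimod \<Rightarrow> nat \<Rightarrow> 'g cochain \<Rightarrow> 'g cochain" where
  "cobound M n \<phi> = (\<lambda>as. if valid (Suc n) as then
      (\<lambda>x. dlact M (hd as) (\<phi> (tl as)) x
          + (\<Sum>i = 1..n. (-1) ^ i * \<phi> (merge i as) x)
          + (-1) ^ (Suc n) * dract M (\<phi> (butlast as)) (last as) x)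
     else (\<lambda>_. 0))"

definition czero :: "'g cochain" where
  "czero = (\<lambda>_ _. 0)"

definition clin :: "complex \<Rightarrow> 'g cochain \<Rightarrow> 'g cochain \<Rightarrow> 'g cochain" where
  "clin c \<phi> \<xi> = (\<lambda>as x. c * \<phi> as x + \<xi> as x)"

definition cocycles :: "('g::group_add) bimod \<Rightarrow> nat \<Rightarrow> 'g cochain set" where
  "cocycles M n = {\<phi> \<in> cochains M n. cobound M n \<phi> = czero}"

definition coboundaries :: "('g::group_add) bimod \<Rightarrow> nat \<Rightarrow> 'g cochain set" where
  "coboundaries M n = (case n of 0 \<Rightarrow> {czero} | Suc m \<Rightarrow> cobound M m ` cochains M m)"

definition cohom_rel :: "('g::group_add) bimod \<Rightarrow> nat \<Rightarrow> ('g cochain \<times> 'g cochain) set" where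
  "cohom_rel M n = {(\<phi>, \<xi>). \<phi> \<in> cocycles M n \<and> \<xi> \<in> cocycles M n \<and>
                      clin (-1) \<xi> \<phi> \<in> coboundaries M n}"

definition cohomology :: "('g::group_add) bimod \<Rightarrow> nat \<Rightarrow> 'g cochain set set" where
  "cohomology M n = cocycles M n // cohom_rel M n"

definition hlin :: "complex \<Rightarrow> 'g cochain set \<Rightarrow> 'g cochain set \<Rightarrow> 'g cochain set" where
  "hlin c P Q = {clin c p q | p q. p \<in> P \<and> q \<in> Q}"

definition cohom_iso :: "('g::group_add) bimod \<Rightarrow> 'g bimod \<Rightarrow> nat \<Rightarrow> bool" where
  "cohom_iso M N n \<longleftrightarrow> (\<exists>F. bij_betw F (cohomology M n) (cohomology N n) \<and>
      (\<forall>P\<in>cohomology M n. \<forall>Q\<in>cohomology M n. \<forall>c. F (hlin c P Q) = hlin c (F P) (F Q)))"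

definition bimod_iso :: "'g bimod \<Rightarrow> 'g bimod \<Rightarrow> bool" where
  "bimod_iso M N \<longleftrightarrow> (\<exists>U. bij_betw U (carr M) (carr N) \<and>
      (\<forall>x\<in>carr M. \<forall>y\<in>carr M. \<forall>c. U (vlin c x y) = vlin c (U x) (U y)) \<and>
      (\<exists>K. \<forall>x\<in>carr M. l1norm (U x) \<le> K * l1norm x) \<and>
      (\<exists>K. \<forall>x\<in>carr M. l1norm x \<le> K * l1norm (U x)) \<and>
      (\<forall>a\<in>l1. \<forall>x\<in>carr M. U (lact M a x) = lact N a (U x) \<and> U (ract M x a) = ract N (U x) a))"

end

theory Submission
  imports Defs
begin



lemma l1_summable: "f \<in> l1 \<Longrightarrow> f summable_on UNIV"
  unfolding l1_def by (auto intro: abs_summable_summable)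

lemma l1_abs: "f \<in> l1 \<Longrightarrow> (\<lambda>g. norm (f g)) summable_on A"
  unfolding l1_def by (auto intro: summable_on_subset_banach)

lemma l1norm_nonneg: "l1norm f \<ge> 0"
  unfolding l1norm_def by (rule infsum_nonneg) auto

lemma norm_le_l1norm: assumes "f \<in> l1" shows "norm (f g) \<le> l1norm f"
proof -
  have "sum (\<lambda>g. norm (f g)) {g} \<le> (\<Sum>\<^sub>\<infinity>g. norm (f g))"
    using assms unfolding l1_def by (intro finite_sum_le_infsum) auto
  thus ?thesis by (simp add: l1norm_def)
qed

lemma vlin_l1: assumes "a \<in> l1" "b \<in> l1" shows "vlin c a b \<in> l1"
proof -
  have s: "(\<lambda>g. norm c * norm (a g) + norm (b g)) summable_on UNIV"
    using assms unfolding l1_def by (intro summable_on_add summable_on_cmult_right) auto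
  show ?thesis unfolding l1_def vlin_def mem_Collect_eq
    by (rule summable_on_comparison_test[OF s]) (auto intro: order.trans[OF norm_triangle_ineq] simp: norm_mult)
qed

lemma l1norm_vlin: assumes "a \<in> l1" "b \<in> l1" shows "l1norm (vlin c a b) \<le> norm c * l1norm a + l1norm b"
proof -
  have s: "(\<lambda>g. norm c * norm (a g) + norm (b g)) summable_on UNIV"
    using assms unfolding l1_def by (intro summable_on_add summable_on_cmult_right) auto
  have "l1norm (vlin c a b) \<le> (\<Sum>\<^sub>\<infinity>g. norm c * norm (a g) + norm (b g))"
    unfolding l1norm_def using vlin_l1[OF assms, of c] unfolding l1_def
    by (intro infsum_mono[OF _ s]) (auto intro: order.trans[OF norm_triangle_ineq] simp: norm_mult vlin_def)
  also have "\<dots> = norm c * l1norm a + l1norm b"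
    using assms unfolding l1_def l1norm_def by (subst infsum_add) (auto intro: summable_on_cmult_right simp: infsum_cmult_right)
  finally show ?thesis .
qed

lemma l1norm_scale: "l1norm (\<lambda>h. k * x h) = norm k * l1norm x"
  unfolding l1norm_def by (simp add: norm_mult infsum_cmult_right')

lemma scale_l1: "x \<in> l1 \<Longrightarrow> (\<lambda>h. k * x h) \<in> l1"
  unfolding l1_def by (simp add: norm_mult summable_on_cmult_right)

lemma infsum_single_pt: "(\<Sum>\<^sub>\<infinity>y. if y = a then f y else 0) = (f a :: 'b::{comm_monoid_add,t2_space})"
proof -
  have "(\<Sum>\<^sub>\<infinity>y. if y = a then f y else 0) = infsum (\<lambda>y. if y = a then f y else 0) {a}"
    by (rule infsum_cong_neutral) auto
  thus ?thesis by simp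
qed

lemma pt_l1: "pt g \<in> l1"
proof -
  have "(\<lambda>x. norm (pt g x)) summable_on UNIV \<longleftrightarrow> (\<lambda>x. norm (pt g x)) summable_on {g}"
    by (rule summable_on_cong_neutral) (auto simp: pt_def)
  thus ?thesis unfolding l1_def by simp
qed

lemma l1norm_pt: "l1norm (pt g) = 1"
  unfolding l1norm_def pt_def
  by (subst infsum_cong[where g="\<lambda>y. if y = g then 1 else 0"]) (auto simp: infsum_single_pt)

lemma aug_pt: "aug (pt g) = 1"
  unfolding aug_def pt_def using infsum_single_pt[of g "\<lambda>_. 1::complex"] by simp

lemma aug_vlin: assumes "a \<in> l1" "b \<in> l1" shows "aug (vlin c a b) = c * aug a + aug b"
  unfolding aug_def vlin_def using l1_summable[OF assms(1)] l1_summable[OF assms(2)]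
  by (subst infsum_add) (auto intro: summable_on_cmult_right simp: infsum_cmult_right)

lemma norm_aug: assumes "a \<in> l1" shows "norm (aug a) \<le> l1norm a"
  using assms unfolding aug_def l1norm_def l1_def by (intro norm_infsum_bound) simp

lemma aug_scale: "a \<in> l1 \<Longrightarrow> aug (\<lambda>h. k * a h) = k * aug a"
  unfolding aug_def by (simp add: infsum_cmult_right')

definition rt :: "'g::group_add \<Rightarrow> 'g vec \<Rightarrow> 'g vec" where
  "rt h x = (\<lambda>z. x (z + - h))"

lemma bij_radd: "bij_betw (\<lambda>z::'g::group_add. z + a) UNIV UNIV"
  by (rule bij_betwI[where g="\<lambda>z. z - a"]) (auto simp: algebra_simps)

lemma bij_ladd: "bij_betw (\<lambda>z::'g::group_add. a + z) UNIV UNIV"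
  by (rule bij_betwI[where g="\<lambda>z. - a + z"]) (auto simp: add.assoc[symmetric])

lemma bij_conj: "bij_betw (\<lambda>z::'g::group_add. - a + z + a) UNIV UNIV"
  by (rule bij_betwI[where g="\<lambda>z. a + z + - a"]) (auto simp: add.assoc)

lemma l1_reindex: assumes "bij_betw s UNIV UNIV" shows "(\<lambda>z. x (s z)) \<in> l1 \<longleftrightarrow> x \<in> l1"
  unfolding l1_def using summable_on_reindex_bij_betw[OF assms, of "\<lambda>z. norm (x z)"] by simp

lemma l1norm_reindex: assumes "bij_betw s UNIV UNIV" shows "l1norm (\<lambda>z. x (s z)) = l1norm x"
  unfolding l1norm_def using infsum_reindex_bij_betw[OF assms, of "\<lambda>z. norm (x z)"] by simp

lemma aug_reindex: assumes "bij_betw s UNIV UNIV" shows "aug (\<lambda>z. x (s z)) = aug x"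
  unfolding aug_def using infsum_reindex_bij_betw[OF assms, of x] by simp

lemma rt_l1: "x \<in> l1 \<Longrightarrow> rt h x \<in> l1"
  unfolding rt_def using l1_reindex[OF bij_radd] by blast
lemma l1norm_rt: "l1norm (rt h x) = l1norm x"
  unfolding rt_def using l1norm_reindex[OF bij_radd] by blast
lemma aug_rt: "aug (rt h x) = aug x"
  unfolding rt_def using aug_reindex[OF bij_radd] by blast
lemma rt_I0: "x \<in> I0 \<Longrightarrow> rt h x \<in> I0"
  unfolding I0_def by (auto simp: rt_l1 aug_rt)
lemma rt_vlin: "rt h (vlin c x y) = vlin c (rt h x) (rt h y)"
  unfolding rt_def vlin_def by simp
lemma rt_rt: "rt a (rt b x) = rt (b + a) x"
  unfolding rt_def by (simp only: minus_add add.assoc)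
lemma rt_0: "rt 0 x = x" unfolding rt_def by simp

lemma eq1: "(- y + z = (a::'g::group_add)) \<longleftrightarrow> (y = z + - a)"
proof
  assume "- y + z = a" hence "y + (- y + z) + - a = y + a + - a" by simp
  thus "y = z + - a" by (simp add: add.assoc[symmetric])
next
  assume "y = z + - a" thus "- y + z = a" by (simp add: minus_add add.assoc)
qed
lemma eq2: "(z + - b = (a::'g::group_add)) \<longleftrightarrow> (z = a + b)"
proof
  assume "z + - b = a" hence "z + - b + b = a + b" by simp
  thus "z = a + b" by (simp add: add.assoc)
next
  assume "z = a + b" thus "z + - b = a" by (simp add: add.assoc)
qed

lemma conv_pt_right: "conv x (pt a) = rt a x"
proof
  fix z
  have "conv x (pt a) z = (\<Sum>\<^sub>\<infinity>y. if y = z + - a then x y else 0)"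
    unfolding conv_def pt_def
    by (rule infsum_cong) (simp add: eq1)
  also have "\<dots> = rt a x z" by (simp add: infsum_single_pt rt_def)
  finally show "conv x (pt a) z = rt a x z" .
qed

lemma conv_pt_left: "conv (pt a) x = (\<lambda>z. x (- a + z))"
proof
  fix z
  have "conv (pt a) x z = (\<Sum>\<^sub>\<infinity>y. if y = a then x (- a + z) else 0)"
    unfolding conv_def pt_def by (rule infsum_cong) auto
  thus "conv (pt a) x z = x (- a + z)" by (simp add: infsum_single_pt)
qed

lemma twl_pt: "twl (pt a) x = (\<lambda>z. x (- a + z + a))"
proof
  fix z
  have "twl (pt a) x z = (\<Sum>\<^sub>\<infinity>y. if y = a then x (- a + z + a) else 0)"
    unfolding twl_def pt_def by (rule infsum_cong) auto
  thus "twl (pt a) x z = x (- a + z + a)" by (simp add: infsum_single_pt)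
qed

lemma conv_pt_pt: "conv (pt a) (pt b) = pt (a + b)"
proof -
  have "conv (pt a) (pt b) = rt b (pt a)" by (rule conv_pt_right)
  thus ?thesis unfolding rt_def pt_def fun_eq_iff by (simp only: eq2) simp
qed




definition ker :: "('g \<Rightarrow> 'g \<Rightarrow> 'g) \<Rightarrow> 'g vec \<Rightarrow> 'g vec \<Rightarrow> 'g vec" where
  "ker \<sigma> a b = (\<lambda>x. \<Sum>\<^sub>\<infinity>y. a y * b (\<sigma> y x))"

locale kern =
  fixes \<sigma> :: "'g \<Rightarrow> 'g \<Rightarrow> 'g"
  assumes bij: "\<And>y. bij_betw (\<sigma> y) UNIV UNIV"
begin

lemma joint_yx:
  assumes a: "a \<in> l1" and b: "b \<in> l1"
  shows "(\<lambda>p. norm (a (fst p) * b (\<sigma> (fst p) (snd p)))) summable_on UNIV \<times> UNIV"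
proof -
  have "(\<lambda>p. norm (a (fst p) * b (\<sigma> (fst p) (snd p)))) summable_on Sigma UNIV (\<lambda>_. UNIV)"
  proof (rule summable_on_SigmaI[where g="\<lambda>y. norm (a y) * l1norm b"])
    fix y :: 'g
    have "((\<lambda>x. norm (b (\<sigma> y x))) has_sum l1norm b) UNIV"
    proof -
      have "(\<lambda>x. norm (b (\<sigma> y x))) summable_on UNIV"
        using summable_on_reindex_bij_betw[OF bij[of y], of "\<lambda>z. norm (b z)"] b unfolding l1_def by simp
      moreover have "(\<Sum>\<^sub>\<infinity>x. norm (b (\<sigma> y x))) = l1norm b"
        unfolding l1norm_def using infsum_reindex_bij_betw[OF bij[of y], of "\<lambda>z. norm (b z)"] by simp
      ultimately show ?thesis by (metis has_sum_infsum)
    qed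
    from has_sum_cmult_right[OF this, of "norm (a y)"]
    show "((\<lambda>x. norm (a (fst (y, x)) * b (\<sigma> (fst (y, x)) (snd (y, x))))) has_sum norm (a y) * l1norm b) UNIV"
      by (simp add: norm_mult)
  next
    show "(\<lambda>y. norm (a y) * l1norm b) summable_on UNIV"
      using a unfolding l1_def by (intro summable_on_cmult_left) simp
  qed simp
  thus ?thesis by simp
qed

lemma joint_xy:
  assumes a: "a \<in> l1" and b: "b \<in> l1"
  shows "(\<lambda>(x,y). norm (a y * b (\<sigma> y x))) summable_on UNIV \<times> UNIV"
proof -
  have "(\<lambda>(x,y). (\<lambda>p. norm (a (fst p) * b (\<sigma> (fst p) (snd p)))) (y,x)) summable_on UNIV \<times> UNIV"
    by (rule iffD1[OF summable_on_swap joint_yx[OF assms]])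
  thus ?thesis by (simp only: fst_conv snd_conv)
qed

lemma row_abs:
  assumes a: "a \<in> l1" and b: "b \<in> l1"
  shows "(\<lambda>y. norm (a y * b (\<sigma> y x))) summable_on UNIV"
proof (rule summable_on_comparison_test)
  show "(\<lambda>y. norm (a y) * l1norm b) summable_on UNIV"
    using a unfolding l1_def by (intro summable_on_cmult_left) simp
  fix y show "norm (a y * b (\<sigma> y x)) \<le> norm (a y) * l1norm b"
    by (simp add: norm_mult mult_left_mono norm_le_l1norm[OF b])
qed simp

lemma row:
  assumes a: "a \<in> l1" and b: "b \<in> l1"
  shows "(\<lambda>y. a y * b (\<sigma> y x)) summable_on UNIV"
  by (rule abs_summable_summable) (rule row_abs[OF assms])

lemma ker_le_row: assumes a: "a \<in> l1" and b: "b \<in> l1"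
  shows "norm (ker \<sigma> a b x) \<le> (\<Sum>\<^sub>\<infinity>y. norm (a y * b (\<sigma> y x)))"
  unfolding ker_def by (rule norm_infsum_bound[OF row_abs[OF assms]])

lemma rows_summable: assumes a: "a \<in> l1" and b: "b \<in> l1"
  shows "(\<lambda>x. \<Sum>\<^sub>\<infinity>y. norm (a y * b (\<sigma> y x))) summable_on UNIV"
proof -
  have "(\<lambda>x. infsum (\<lambda>y. (\<lambda>(x,y). norm (a y * b (\<sigma> y x))) (x, y)) UNIV) summable_on UNIV"
    by (rule summable_on_SigmaD[OF joint_xy[OF assms]]) (unfold case_prod_conv, rule row_abs[OF assms])
  thus ?thesis by (unfold case_prod_conv)
qed

lemma ker_l1: assumes a: "a \<in> l1" and b: "b \<in> l1" shows "ker \<sigma> a b \<in> l1"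
  unfolding l1_def mem_Collect_eq
  by (rule summable_on_comparison_test[OF rows_summable[OF assms]]) (rule ker_le_row[OF assms], rule norm_ge_zero)

lemma ker_norm: assumes a: "a \<in> l1" and b: "b \<in> l1"
  shows "l1norm (ker \<sigma> a b) \<le> l1norm a * l1norm b"
proof -
  have "l1norm (ker \<sigma> a b) \<le> (\<Sum>\<^sub>\<infinity>x. \<Sum>\<^sub>\<infinity>y. norm (a y * b (\<sigma> y x)))"
    unfolding l1norm_def using ker_l1[OF assms] unfolding l1_def
    by (intro infsum_mono rows_summable[OF assms] ker_le_row[OF assms]) auto
  also have "\<dots> = (\<Sum>\<^sub>\<infinity>y. \<Sum>\<^sub>\<infinity>x. norm (a y * b (\<sigma> y x)))"
    using joint_xy[OF assms] by (intro infsum_swap_banach) simp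
  also have "\<dots> = (\<Sum>\<^sub>\<infinity>y. norm (a y) * l1norm b)"
  proof (rule infsum_cong)
    fix y
    have "(\<Sum>\<^sub>\<infinity>x. norm (b (\<sigma> y x))) = l1norm b"
      unfolding l1norm_def using infsum_reindex_bij_betw[OF bij[of y], of "\<lambda>z. norm (b z)"] by simp
    thus "(\<Sum>\<^sub>\<infinity>x. norm (a y * b (\<sigma> y x))) = norm (a y) * l1norm b"
      by (simp add: norm_mult infsum_cmult_right')
  qed
  also have "\<dots> = l1norm a * l1norm b"
    unfolding l1norm_def by (simp add: infsum_cmult_left')
  finally show ?thesis .
qed

lemma ker_aug: assumes a: "a \<in> l1" and b: "b \<in> l1"
  shows "aug (ker \<sigma> a b) = aug a * aug b"
proof -
  have js: "(\<lambda>(x,y). a y * b (\<sigma> y x)) summable_on UNIV \<times> UNIV"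
  proof (rule abs_summable_summable)
    show "(\<lambda>p. norm ((\<lambda>(x,y). a y * b (\<sigma> y x)) p)) summable_on UNIV \<times> UNIV"
      by (rule summable_on_cong[THEN iffD1, OF _ joint_xy[OF assms]]) auto
  qed
  have "aug (ker \<sigma> a b) = (\<Sum>\<^sub>\<infinity>y. \<Sum>\<^sub>\<infinity>x. a y * b (\<sigma> y x))"
    unfolding aug_def ker_def by (rule infsum_swap_banach[OF js])
  also have "\<dots> = (\<Sum>\<^sub>\<infinity>y. a y * aug b)"
  proof (rule infsum_cong)
    fix y
    have "(\<Sum>\<^sub>\<infinity>x. b (\<sigma> y x)) = aug b"
      unfolding aug_def using infsum_reindex_bij_betw[OF bij[of y], of b] by simp
    thus "(\<Sum>\<^sub>\<infinity>x. a y * b (\<sigma> y x)) = a y * aug b"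
      by (simp add: infsum_cmult_right')
  qed
  also have "\<dots> = aug a * aug b"
    unfolding aug_def by (simp add: infsum_cmult_left')
  finally show ?thesis .
qed

lemma lin_sum: assumes "f summable_on UNIV" "g summable_on UNIV"
  shows "(\<Sum>\<^sub>\<infinity>y. c * f y + g y) = c * infsum f UNIV + (infsum g UNIV :: complex)"
proof -
  have "(\<Sum>\<^sub>\<infinity>y. c * f y + g y) = (\<Sum>\<^sub>\<infinity>y. c * f y) + infsum g UNIV"
    by (rule infsum_add[OF summable_on_cmult_right[OF assms(1)] assms(2)])
  thus ?thesis by (simp only: infsum_cmult_right')
qed

lemma ker_lin1: assumes "a \<in> l1" "a' \<in> l1" "b \<in> l1"
  shows "ker \<sigma> (vlin c a a') b = vlin c (ker \<sigma> a b) (ker \<sigma> a' b)"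
proof
  fix x
  have "ker \<sigma> (vlin c a a') b x = (\<Sum>\<^sub>\<infinity>y. c * (a y * b (\<sigma> y x)) + a' y * b (\<sigma> y x))"
    unfolding ker_def vlin_def by (rule infsum_cong) (simp add: algebra_simps)
  also have "\<dots> = c * ker \<sigma> a b x + ker \<sigma> a' b x"
    unfolding ker_def by (rule lin_sum[OF row[OF assms(1,3)] row[OF assms(2,3)]])
  finally show "ker \<sigma> (vlin c a a') b x = vlin c (ker \<sigma> a b) (ker \<sigma> a' b) x"
    by (simp add: vlin_def)
qed

lemma ker_lin2: assumes "a \<in> l1" "b \<in> l1" "b' \<in> l1"
  shows "ker \<sigma> a (vlin c b b') = vlin c (ker \<sigma> a b) (ker \<sigma> a b')"
proof
  fix x
  have "ker \<sigma> a (vlin c b b') x = (\<Sum>\<^sub>\<infinity>y. c * (a y * b (\<sigma> y x)) + a y * b' (\<sigma> y x))"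
    unfolding ker_def vlin_def by (rule infsum_cong) (simp add: algebra_simps)
  also have "\<dots> = c * ker \<sigma> a b x + ker \<sigma> a b' x"
    unfolding ker_def by (rule lin_sum[OF row[OF assms(1,2)] row[OF assms(1,3)]])
  finally show "ker \<sigma> a (vlin c b b') x = vlin c (ker \<sigma> a b) (ker \<sigma> a b') x"
    by (simp add: vlin_def)
qed

end

lemma conv_ker: "conv a b = ker (\<lambda>y x. - y + x) a b"
  unfolding conv_def ker_def ..
lemma twl_ker: "twl a b = ker (\<lambda>y x. - y + x + y) a b"
  unfolding twl_def ker_def ..

interpretation kconv: kern "\<lambda>y x::'g::group_add. - y + x"
  by standard (rule bij_ladd)
interpretation ktwl: kern "\<lambda>y x::'g::group_add. - y + x + y"
  by standard (rule bij_conj)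

lemma conv_l1: "a \<in> l1 \<Longrightarrow> b \<in> l1 \<Longrightarrow> conv a b \<in> l1"
  unfolding conv_ker by (rule kconv.ker_l1)
lemma conv_norm: "a \<in> l1 \<Longrightarrow> b \<in> l1 \<Longrightarrow> l1norm (conv a b) \<le> l1norm a * l1norm b"
  unfolding conv_ker by (rule kconv.ker_norm)
lemma conv_aug: "a \<in> l1 \<Longrightarrow> b \<in> l1 \<Longrightarrow> aug (conv a b) = aug a * aug b"
  unfolding conv_ker by (rule kconv.ker_aug)
lemma conv_lin1: "a \<in> l1 \<Longrightarrow> a' \<in> l1 \<Longrightarrow> b \<in> l1 \<Longrightarrow> conv (vlin c a a') b = vlin c (conv a b) (conv a' b)"
  unfolding conv_ker by (rule kconv.ker_lin1)
lemma conv_lin2: "a \<in> l1 \<Longrightarrow> b \<in> l1 \<Longrightarrow> b' \<in> l1 \<Longrightarrow> conv a (vlin c b b') = vlin c (conv a b) (conv a b')"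
  unfolding conv_ker by (rule kconv.ker_lin2)
lemma twl_l1: "a \<in> l1 \<Longrightarrow> b \<in> l1 \<Longrightarrow> twl a b \<in> l1"
  unfolding twl_ker by (rule ktwl.ker_l1)
lemma twl_norm: "a \<in> l1 \<Longrightarrow> b \<in> l1 \<Longrightarrow> l1norm (twl a b) \<le> l1norm a * l1norm b"
  unfolding twl_ker by (rule ktwl.ker_norm)
lemma twl_aug: "a \<in> l1 \<Longrightarrow> b \<in> l1 \<Longrightarrow> aug (twl a b) = aug a * aug b"
  unfolding twl_ker by (rule ktwl.ker_aug)
lemma twl_lin1: "a \<in> l1 \<Longrightarrow> a' \<in> l1 \<Longrightarrow> b \<in> l1 \<Longrightarrow> twl (vlin c a a') b = vlin c (twl a b) (twl a' b)"
  unfolding twl_ker by (rule ktwl.ker_lin1)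
lemma twl_lin2: "a \<in> l1 \<Longrightarrow> b \<in> l1 \<Longrightarrow> b' \<in> l1 \<Longrightarrow> twl a (vlin c b b') = vlin c (twl a b) (twl a b')"
  unfolding twl_ker by (rule ktwl.ker_lin2)




definition res :: "'g set \<Rightarrow> 'g vec \<Rightarrow> 'g vec" where
  "res F a = (\<lambda>g. if g \<in> F then a g else 0)"

lemma zero_vlin: "(\<lambda>_. 0) = vlin (-1) (pt g) (pt g)"
  unfolding vlin_def by auto

lemma res_finite: assumes "finite F"
  shows "res F a \<in> l1 \<and> (\<forall>f. (\<forall>x\<in>l1. \<forall>y\<in>l1. \<forall>c. f (vlin c x y) = c * f x + f y) \<longrightarrow>
           (\<forall>g. f (pt g) = 0) \<longrightarrow> f (res F a) = 0)"
  using assms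
proof (induction F rule: finite_induct)
  case empty
  have r: "res {} a = vlin (-1) (pt undefined) (pt undefined)"
    unfolding res_def by (simp add: zero_vlin[symmetric])
  show ?case unfolding r by (auto intro: vlin_l1 pt_l1 simp: pt_l1)
next
  case (insert g F)
  have r: "res (insert g F) a = vlin (a g) (pt g) (res F a)"
    unfolding res_def vlin_def pt_def using insert(2) by auto
  show ?case unfolding r using insert(3) by (auto intro: vlin_l1 pt_l1 simp: pt_l1)
qed

lemma one_var:
  assumes lin: "\<forall>x\<in>l1. \<forall>y\<in>l1. \<forall>c. f (vlin c x y) = c * f x + f y"
    and bnd: "\<forall>x\<in>l1. norm (f x) \<le> K * l1norm x"
    and pt0: "\<forall>g. f (pt g) = 0"
    and a: "a \<in> l1"
  shows "f a = 0"
proof -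
  have sa: "(\<lambda>g. norm (a g)) summable_on UNIV" using a unfolding l1_def by simp
  have main: "norm (f a) \<le> max K 0 * e" if e: "e > 0" for e
  proof -
    obtain F where F: "finite F" "dist (sum (\<lambda>g. norm (a g)) F) (l1norm a) \<le> e"
      using infsum_finite_approximation[OF sa e] unfolding l1norm_def by auto
    have rF: "res F a \<in> l1" "f (res F a) = 0" using res_finite[OF F(1), of a] lin pt0 by auto
    define r where "r = res (- F) a"
    have ar: "a = vlin 1 (res F a) r" unfolding r_def res_def vlin_def by auto
    have rl: "r \<in> l1"
    proof -
      have "r = vlin (-1) (res F a) a" unfolding r_def res_def vlin_def by auto
      thus ?thesis using vlin_l1[OF rF(1) a] by simp
    qed
    have fa: "f a = f r" using lin rF rl ar by (metis mult_1 add_0)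
    have s1: "(\<lambda>g. norm (a g)) summable_on F" "(\<lambda>g. norm (a g)) summable_on (-F)"
      using a unfolding l1_def by (auto intro: summable_on_subset_banach)
    have "l1norm a = infsum (\<lambda>g. norm (a g)) (F \<union> -F)" unfolding l1norm_def by simp
    also have "\<dots> = infsum (\<lambda>g. norm (a g)) F + infsum (\<lambda>g. norm (a g)) (-F)"
      by (rule infsum_Un_disjoint[OF s1]) auto
    also have "infsum (\<lambda>g. norm (a g)) (-F) = l1norm r"
      unfolding l1norm_def r_def res_def by (rule infsum_cong_neutral) auto
    finally have "l1norm r = l1norm a - sum (\<lambda>g. norm (a g)) F" using F(1) by simp
    hence "l1norm r \<le> e" using F(2) by (simp add: dist_real_def)
    have "norm (f a) \<le> K * l1norm r" using bnd rl fa by simp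
    also have "\<dots> \<le> max K 0 * l1norm r" by (simp add: mult_right_mono l1norm_nonneg)
    also have "\<dots> \<le> max K 0 * e" using \<open>l1norm r \<le> e\<close> by (simp add: mult_left_mono)
    finally show ?thesis .
  qed
  show ?thesis
  proof (rule ccontr)
    assume "f a \<noteq> 0"
    define e where "e = norm (f a) / (2 * (max K 0 + 1))"
    have d: "max K 0 + 1 > 0" by simp
    have "e > 0" using \<open>f a \<noteq> 0\<close> unfolding e_def by (simp add: add_pos_nonneg)
    have "max K 0 * e < norm (f a)"
    proof -
      have "max K 0 * e \<le> (max K 0 + 1) * e" using \<open>e>0\<close> by (simp add: mult_right_mono)
      also have "\<dots> = norm (f a) / 2" unfolding e_def using d by (simp add: field_simps)
      also have "\<dots> < norm (f a)" using \<open>f a \<noteq> 0\<close> by simp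
      finally show ?thesis .
    qed
    with main[OF \<open>e>0\<close>] show False by simp
  qed
qed

definition mlb :: "nat \<Rightarrow> ('g vec list \<Rightarrow> complex) \<Rightarrow> bool" where
  "mlb n F \<longleftrightarrow> (\<forall>as i a b c. valid n as \<longrightarrow> i < n \<longrightarrow> a \<in> l1 \<longrightarrow> b \<in> l1 \<longrightarrow>
        F (as[i := vlin c a b]) = c * F (as[i := a]) + F (as[i := b])) \<and>
     (\<exists>K. \<forall>as. valid n as \<longrightarrow> norm (F as) \<le> K * prod_list (map l1norm as))"

lemma prod_upd: fixes f :: "'a \<Rightarrow> real" shows "k < length xs \<Longrightarrow>
  prod_list (map f (xs[k := v])) = f v * (prod_list (map f (take k xs)) * prod_list (map f (drop (Suc k) xs)))"
  by (simp add: upd_conv_take_nth_drop algebra_simps)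

lemma valid_upd: "valid n as \<Longrightarrow> a \<in> l1 \<Longrightarrow> valid n (as[i := a])"
  unfolding valid_def using set_update_subset_insert by fastforce

lemma all_pt: assumes "\<forall>j<n. \<exists>g. as ! j = pt g" "length as = n"
  shows "\<exists>gs. length gs = n \<and> as = map pt gs"
proof -
  obtain G where G: "\<forall>j<n. as ! j = pt (G j)" using assms(1) by metis
  show ?thesis using G assms(2) by (intro exI[of _ "map G [0..<n]"]) (auto intro: nth_equalityI)
qed

lemma mlb_zero:
  fixes F :: "'g vec list \<Rightarrow> complex"
  assumes m: "mlb n F" and z: "\<forall>gs. length gs = n \<longrightarrow> F (map pt gs) = 0" and v: "valid n as"
  shows "F as = 0"
proof -
  have lin: "\<And>as i a b c. valid n as \<Longrightarrow> i < n \<Longrightarrow> a \<in> l1 \<Longrightarrow> b \<in> l1 \<Longrightarrow>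
        F (as[i := vlin c a b]) = c * F (as[i := a]) + F (as[i := b])" using m unfolding mlb_def by blast
  obtain K where K: "\<And>as. valid n as \<Longrightarrow> norm (F as) \<le> K * prod_list (map l1norm as)"
    using m unfolding mlb_def by blast
  have Q: "\<forall>as. valid n as \<longrightarrow> (\<forall>j. k \<le> j \<longrightarrow> j < n \<longrightarrow> (\<exists>g. as!j = pt g)) \<longrightarrow> F as = 0"
    if "k \<le> n" for k
    using that
  proof (induction k)
    case 0
    show ?case
    proof (intro allI impI)
      fix as :: "'g vec list" assume va: "valid n as" and h: "\<forall>j. 0 \<le> j \<longrightarrow> j < n \<longrightarrow> (\<exists>g. as ! j = pt g)"
      have "length as = n" using va unfolding valid_def by simp
      then obtain gs where "length gs = n" "as = map pt gs" using all_pt[of n as] h by blast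
      thus "F as = 0" using z by simp
    qed
  next
    case (Suc p)
    show ?case
    proof (intro allI impI)
      fix as :: "'g vec list"
      assume va: "valid n as" and hp: "\<forall>j. Suc p \<le> j \<longrightarrow> j < n \<longrightarrow> (\<exists>g. as ! j = pt g)"
      have p: "p < n" using Suc.prems by simp
      have len: "length as = n" using va unfolding valid_def by simp
      define f where "f = (\<lambda>a. F (as[p := a]))"
      define C where "C = K * (prod_list (map l1norm (take p as)) * prod_list (map l1norm (drop (Suc p) as)))"
      have "f (as ! p) = 0"
      proof (rule one_var[where K=C and f=f and a="as ! p"])
        show "\<forall>x\<in>l1. \<forall>y\<in>l1. \<forall>c. f (vlin c x y) = c * f x + f y"
          unfolding f_def using lin[OF va p] by blast
        show "\<forall>x\<in>l1. norm (f x) \<le> C * l1norm x"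
        proof
          fix x :: "'g vec" assume x: "x \<in> l1"
          have "norm (f x) \<le> K * prod_list (map l1norm (as[p := x]))"
            unfolding f_def by (rule K[OF valid_upd[OF va x]])
          also have "\<dots> = C * l1norm x" unfolding C_def
            using prod_upd[of p as l1norm x] len p by (simp only: mult_ac)
          finally show "norm (f x) \<le> C * l1norm x" .
        qed
        show "\<forall>g. f (pt g) = 0"
        proof
          fix g
          have "valid n (as[p := pt g])" by (rule valid_upd[OF va pt_l1])
          moreover have "\<forall>j. p \<le> j \<longrightarrow> j < n \<longrightarrow> (\<exists>g'. as[p := pt g] ! j = pt g')"
          proof (intro allI impI)
            fix j assume "p \<le> j" "j < n"
            show "\<exists>g'. as[p := pt g] ! j = pt g'"
            proof (cases "j = p")
              case True thus ?thesis using len p by auto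
            next
              case False thus ?thesis using hp \<open>p \<le> j\<close> \<open>j < n\<close> by simp
            qed
          qed
          ultimately show "f (pt g) = 0" unfolding f_def using Suc.IH Suc.prems by simp
        qed
        show "as ! p \<in> l1" using va p len unfolding valid_def by auto
      qed
      thus "F as = 0" unfolding f_def by simp
    qed
  qed
  show ?thesis using Q[of n] v by simp
qed

lemma cbound_mono: fixes M :: "'g bimod" shows "cbound M n \<phi> K \<Longrightarrow> K \<le> K' \<Longrightarrow> cbound M n \<phi> K'"
proof -
  assume c: "cbound M n \<phi> K" and k: "K \<le> K'"
  show ?thesis unfolding cbound_def
  proof (intro allI impI)
    fix as :: "'g vec list" and x assume "valid n as" "x \<in> carr M"
    hence "norm (\<phi> as x) \<le> K * prod_list (map l1norm as) * l1norm x" using c unfolding cbound_def by blast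
    also have "\<dots> \<le> K' * prod_list (map l1norm as) * l1norm x"
    proof -
      have "prod_list (map l1norm as) * l1norm x \<ge> 0"
        by (intro mult_nonneg_nonneg prod_list_nonneg) (auto simp: l1norm_nonneg)
      thus ?thesis using k by (simp add: mult.assoc mult_right_mono)
    qed
    finally show "norm (\<phi> as x) \<le> K' * prod_list (map l1norm as) * l1norm x" .
  qed
qed




lemma cochD1: "\<phi> \<in> cochains M n \<Longrightarrow> valid n as \<Longrightarrow> \<phi> as \<in> dualset (carr M)"
  unfolding cochains_def by blast
lemma cochD2: "\<phi> \<in> cochains M n \<Longrightarrow> \<not> valid n as \<Longrightarrow> \<phi> as = (\<lambda>_. 0)"
  unfolding cochains_def by blast
lemma cochD3: "\<phi> \<in> cochains M n \<Longrightarrow> valid n as \<Longrightarrow> i < n \<Longrightarrow> a \<in> l1 \<Longrightarrow> b \<in> l1 \<Longrightarrow>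
   \<phi> (as[i := vlin c a b]) = (\<lambda>x. c * \<phi> (as[i := a]) x + \<phi> (as[i := b]) x)"
  unfolding cochains_def by blast
lemma cochD4: "\<phi> \<in> cochains M n \<Longrightarrow> \<exists>K. cbound M n \<phi> K"
  unfolding cochains_def by blast
lemma cochD4': "\<phi> \<in> cochains M n \<Longrightarrow> \<exists>K\<ge>0. cbound M n \<phi> K"
  using cochD4 cbound_mono by (metis max.cobounded1 max.cobounded2)
lemma cochI:
  fixes \<phi> :: "'g cochain" and M :: "'g bimod"
  assumes "\<And>as. valid n as \<Longrightarrow> \<phi> as \<in> dualset (carr M)"
    "\<And>as. \<not> valid n as \<Longrightarrow> \<phi> as = (\<lambda>_. 0)"
    "\<And>as i (a::'g vec) (b::'g vec) c. valid n as \<Longrightarrow> i < n \<Longrightarrow> a \<in> l1 \<Longrightarrow> b \<in> l1 \<Longrightarrow>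
        \<phi> (as[i := vlin c a b]) = (\<lambda>x. c * \<phi> (as[i := a]) x + \<phi> (as[i := b]) x)"
    "cbound M n \<phi> K"
  shows "\<phi> \<in> cochains M n"
  unfolding cochains_def using assms by blast

lemma dualD0: "f \<in> dualset X \<Longrightarrow> x \<notin> X \<Longrightarrow> f x = 0"
  unfolding dualset_def by blast
lemma dualD1: "f \<in> dualset X \<Longrightarrow> x \<in> X \<Longrightarrow> y \<in> X \<Longrightarrow> f (vlin c x y) = c * f x + f y"
  unfolding dualset_def by blast
lemma dualI:
  assumes "\<And>x y c. x \<in> X \<Longrightarrow> y \<in> X \<Longrightarrow> f (vlin c x y) = c * f x + f y"
    "\<And>x. x \<in> X \<Longrightarrow> norm (f x) \<le> K * l1norm x" "\<And>x. x \<notin> X \<Longrightarrow> f x = 0"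
  shows "f \<in> dualset X"
  unfolding dualset_def using assms by blast

lemma cboundD: "cbound M n \<phi> K \<Longrightarrow> valid n as \<Longrightarrow> x \<in> carr M \<Longrightarrow>
   norm (\<phi> as x) \<le> K * prod_list (map l1norm as) * l1norm x"
  unfolding cbound_def by blast

lemma prodnn: "0 \<le> prod_list (map l1norm as)"
  by (rule prod_list_nonneg) (auto simp: l1norm_nonneg)

lemma cochain_eq:
  fixes M :: "'g bimod"
  assumes p: "\<phi> \<in> cochains M n" and q: "\<psi> \<in> cochains M n"
    and e: "\<forall>gs. length gs = n \<longrightarrow> \<phi> (map pt gs) = \<psi> (map pt gs)"
  shows "\<phi> = \<psi>"
proof (intro ext)
  fix as :: "'g vec list" and x
  show "\<phi> as x = \<psi> as x"
  proof (cases "valid n as")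
    case False thus ?thesis using cochD2[OF p] cochD2[OF q] by simp
  next
    case va: True
    show ?thesis
    proof (cases "x \<in> carr M")
      case False thus ?thesis using dualD0[OF cochD1[OF p va]] dualD0[OF cochD1[OF q va]] by simp
    next
      case x: True
      define F where "F = (\<lambda>bs. \<phi> bs x - \<psi> bs x)"
      obtain K1 K2 where K: "cbound M n \<phi> K1" "cbound M n \<psi> K2" using cochD4 p q by metis
      have "mlb n F" unfolding mlb_def
      proof (intro conjI allI impI)
        fix bs :: "'g vec list" and i and a b :: "'g vec" and c assume "valid n bs" "i < n" "a \<in> l1" "b \<in> l1"
        thus "F (bs[i := vlin c a b]) = c * F (bs[i := a]) + F (bs[i := b])"
          unfolding F_def using cochD3[OF p] cochD3[OF q] by (simp add: algebra_simps)
      next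
        show "\<exists>K. \<forall>as. valid n as \<longrightarrow> norm (F as) \<le> K * prod_list (map l1norm as)"
        proof (intro exI allI impI)
          fix bs :: "'g vec list" assume v: "valid n bs"
          have "norm (F bs) \<le> norm (\<phi> bs x) + norm (\<psi> bs x)" unfolding F_def by (rule norm_triangle_ineq4)
          also have "\<dots> \<le> K1 * prod_list (map l1norm bs) * l1norm x + K2 * prod_list (map l1norm bs) * l1norm x"
            using cboundD[OF K(1) v x] cboundD[OF K(2) v x] by simp
          also have "\<dots> = ((K1 + K2) * l1norm x) * prod_list (map l1norm bs)" by (simp add: algebra_simps)
          finally show "norm (F bs) \<le> ((K1 + K2) * l1norm x) * prod_list (map l1norm bs)" .
        qed
      qed
      moreover have "\<forall>gs. length gs = n \<longrightarrow> F (map pt gs) = 0" unfolding F_def using e by simp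
      ultimately have "F as = 0" using mlb_zero va by blast
      thus ?thesis unfolding F_def by simp
    qed
  qed
qed

lemma czero_cochain: "czero \<in> cochains M n"
  by (rule cochI[where K=0]) (auto simp: czero_def dualset_def cbound_def intro: exI[of _ 0])

lemma clin_cochain:
  fixes \<phi> :: "'g cochain" and M :: "'g bimod"
  assumes p: "\<phi> \<in> cochains M n" and q: "\<psi> \<in> cochains M n"
  shows "clin c \<phi> \<psi> \<in> cochains M n"
proof -
  obtain K1 K2 where K: "cbound M n \<phi> K1" "cbound M n \<psi> K2" "K1 \<ge> 0" "K2 \<ge> 0"
    using cochD4' p q by metis
  show ?thesis
  proof (rule cochI[where K="norm c * K1 + K2"])
    fix as :: "'g vec list" assume v: "valid n as"
    show "clin c \<phi> \<psi> as \<in> dualset (carr M)"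
    proof (rule dualI[where K="norm c * K1 * prod_list (map l1norm as) + K2 * prod_list (map l1norm as)"])
      fix x y c' assume "x \<in> carr M" "y \<in> carr M"
      thus "clin c \<phi> \<psi> as (vlin c' x y) = c' * clin c \<phi> \<psi> as x + clin c \<phi> \<psi> as y"
        unfolding clin_def using dualD1[OF cochD1[OF p v]] dualD1[OF cochD1[OF q v]] by (simp add: algebra_simps)
    next
      fix x assume x: "x \<in> carr M"
      have "norm (clin c \<phi> \<psi> as x) \<le> norm c * norm (\<phi> as x) + norm (\<psi> as x)"
        unfolding clin_def by (metis norm_mult norm_triangle_ineq)
      also have "\<dots> \<le> norm c * (K1 * prod_list (map l1norm as) * l1norm x) + K2 * prod_list (map l1norm as) * l1norm x"
        using cboundD[OF K(1) v x] cboundD[OF K(2) v x] by (intro add_mono mult_left_mono) auto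
      finally show "norm (clin c \<phi> \<psi> as x) \<le> (norm c * K1 * prod_list (map l1norm as) + K2 * prod_list (map l1norm as)) * l1norm x"
        by (simp add: algebra_simps)
    next
      fix x assume "x \<notin> carr M"
      thus "clin c \<phi> \<psi> as x = 0" unfolding clin_def using dualD0[OF cochD1[OF p v]] dualD0[OF cochD1[OF q v]] by simp
    qed
  next
    fix as :: "'g vec list" assume "\<not> valid n as"
    thus "clin c \<phi> \<psi> as = (\<lambda>_. 0)" unfolding clin_def using cochD2[OF p] cochD2[OF q] by simp
  next
    fix as :: "'g vec list" and i and a b :: "'g vec" and c' assume "valid n as" "i < n" "a \<in> l1" "b \<in> l1"
    thus "clin c \<phi> \<psi> (as[i := vlin c' a b]) = (\<lambda>x. c' * clin c \<phi> \<psi> (as[i := a]) x + clin c \<phi> \<psi> (as[i := b]) x)"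
      unfolding clin_def using cochD3[OF p] cochD3[OF q] by (simp add: algebra_simps)
  next
    show "cbound M n (clin c \<phi> \<psi>) (norm c * K1 + K2)" unfolding cbound_def
    proof (intro allI impI)
      fix as :: "'g vec list" and x assume v: "valid n as" and x: "x \<in> carr M"
      have "norm (clin c \<phi> \<psi> as x) \<le> norm c * norm (\<phi> as x) + norm (\<psi> as x)"
        unfolding clin_def by (metis norm_mult norm_triangle_ineq)
      also have "\<dots> \<le> norm c * (K1 * prod_list (map l1norm as) * l1norm x) + K2 * prod_list (map l1norm as) * l1norm x"
        using cboundD[OF K(1) v x] cboundD[OF K(2) v x] by (intro add_mono mult_left_mono) auto
      finally show "norm (clin c \<phi> \<psi> as x) \<le> (norm c * K1 + K2) * prod_list (map l1norm as) * l1norm x"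
        by (simp add: algebra_simps)
    qed
  qed
qed

lemma cobound_clin: "cobound M n (clin c \<phi> \<psi>) = clin c (cobound M n \<phi>) (cobound M n \<psi>)"
  unfolding cobound_def clin_def dlact_def dract_def
  by (auto simp: fun_eq_iff algebra_simps sum.distrib sum_distrib_left)

lemma clin_czero: "clin c czero czero = czero"
  unfolding clin_def czero_def by simp




lemma cocyc_coch: "cocycles M n \<subseteq> cochains M n"
  unfolding cocycles_def by auto

lemma rel_sub: "cohom_rel M n `` {\<phi>} \<subseteq> cocycles M n"
  unfolding cohom_rel_def by auto

lemma cohom_sub: "X \<in> cohomology M n \<Longrightarrow> X \<subseteq> cochains M n"
  unfolding cohomology_def by (auto elim!: quotientE simp: cohom_rel_def cocycles_def)

lemma chain_iso_cohom:
  fixes M N :: "('g::group_add) bimod" and \<Theta> :: "nat \<Rightarrow> 'g cochain \<Rightarrow> 'g cochain"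
  assumes bij: "\<And>n. bij_betw (\<Theta> n) (cochains M n) (cochains N n)"
    and lin: "\<And>n \<psi> \<xi> c. \<psi> \<in> cochains M n \<Longrightarrow> \<xi> \<in> cochains M n \<Longrightarrow>
                 \<Theta> n (clin c \<psi> \<xi>) = clin c (\<Theta> n \<psi>) (\<Theta> n \<xi>)"
    and chain: "\<And>n \<psi>. \<psi> \<in> cochains M n \<Longrightarrow> cobound N n (\<Theta> n \<psi>) = \<Theta> (Suc n) (cobound M n \<psi>)"
    and clos: "\<And>n \<psi>. \<psi> \<in> cochains M n \<Longrightarrow> cobound M n \<psi> \<in> cochains M (Suc n)"
  shows "cohom_iso M N n"
proof -
  have inj: "\<And>n. inj_on (\<Theta> n) (cochains M n)" and img: "\<And>n. \<Theta> n ` cochains M n = cochains N n"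
    using bij unfolding bij_betw_def by auto
  have mem: "\<And>n \<psi>. \<psi> \<in> cochains M n \<Longrightarrow> \<Theta> n \<psi> \<in> cochains N n" using img by blast
  have T0: "\<And>n. \<Theta> n czero = czero"
  proof -
    fix n
    have "\<Theta> n czero = \<Theta> n (clin (-1) czero czero)" by (simp add: clin_czero)
    also have "\<dots> = clin (-1) (\<Theta> n czero) (\<Theta> n czero)" by (rule lin) (auto intro: czero_cochain)
    finally have e: "\<Theta> n czero = clin (-1) (\<Theta> n czero) (\<Theta> n czero)" .
    show "\<Theta> n czero = czero"
    proof (intro ext)
      fix as x
      have "\<Theta> n czero as x = clin (-1) (\<Theta> n czero) (\<Theta> n czero) as x" using fun_cong[OF fun_cong[OF e, of as], of x] .
      thus "\<Theta> n czero as x = czero as x" unfolding clin_def czero_def by simp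
    qed
  qed
  have Z: "\<And>n \<psi>. \<psi> \<in> cochains M n \<Longrightarrow> \<psi> \<in> cocycles M n \<longleftrightarrow> \<Theta> n \<psi> \<in> cocycles N n"
  proof -
    fix n \<psi> assume p: "\<psi> \<in> cochains M n"
    have "cobound M n \<psi> = czero \<longleftrightarrow> \<Theta> (Suc n) (cobound M n \<psi>) = \<Theta> (Suc n) czero"
      using inj_onD[OF inj _ clos[OF p] czero_cochain] by auto
    thus "\<psi> \<in> cocycles M n \<longleftrightarrow> \<Theta> n \<psi> \<in> cocycles N n"
      unfolding cocycles_def using p mem[OF p] chain[OF p] T0 by auto
  qed
  have B: "\<And>n ch. ch \<in> cochains M n \<Longrightarrow> ch \<in> coboundaries M n \<longleftrightarrow> \<Theta> n ch \<in> coboundaries N n"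
  proof -
    fix n ch assume x: "ch \<in> cochains M n"
    show "ch \<in> coboundaries M n \<longleftrightarrow> \<Theta> n ch \<in> coboundaries N n"
    proof (cases n)
      case 0
      have "ch = czero \<longleftrightarrow> \<Theta> n ch = \<Theta> n czero" using inj_onD[OF inj _ x czero_cochain] by auto
      thus ?thesis unfolding coboundaries_def 0 using T0 by simp
    next
      case (Suc m)
      show ?thesis
      proof
        assume "ch \<in> coboundaries M n"
        then obtain \<eta> where e: "\<eta> \<in> cochains M m" "ch = cobound M m \<eta>" unfolding coboundaries_def Suc by auto
        have "\<Theta> n ch = cobound N m (\<Theta> m \<eta>)" unfolding e Suc using chain[OF e(1)] by simp
        thus "\<Theta> n ch \<in> coboundaries N n" unfolding coboundaries_def Suc using mem[OF e(1)] by auto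
      next
        assume "\<Theta> n ch \<in> coboundaries N n"
        then obtain \<eta>' where e: "\<eta>' \<in> cochains N m" "\<Theta> n ch = cobound N m \<eta>'" unfolding coboundaries_def Suc by auto
        obtain \<eta> where h: "\<eta> \<in> cochains M m" "\<eta>' = \<Theta> m \<eta>" using e(1) img by blast
        have "\<Theta> (Suc m) ch = \<Theta> (Suc m) (cobound M m \<eta>)" using e(2) chain[OF h(1)] h(2) Suc by simp
        hence "ch = cobound M m \<eta>" using inj_onD[OF inj _ x[unfolded Suc] clos[OF h(1)]] by simp
        thus "ch \<in> coboundaries M n" unfolding coboundaries_def Suc using h(1) by auto
      qed
    qed
  qed
  have R: "\<And>\<phi> \<xi>. \<phi> \<in> cochains M n \<Longrightarrow> \<xi> \<in> cochains M n \<Longrightarrow>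
            (\<phi>, \<xi>) \<in> cohom_rel M n \<longleftrightarrow> (\<Theta> n \<phi>, \<Theta> n \<xi>) \<in> cohom_rel N n"
  proof -
    fix \<phi> \<xi> assume p: "\<phi> \<in> cochains M n" and q: "\<xi> \<in> cochains M n"
    have "clin (-1) \<xi> \<phi> \<in> coboundaries M n \<longleftrightarrow> clin (-1) (\<Theta> n \<xi>) (\<Theta> n \<phi>) \<in> coboundaries N n"
      using B[OF clin_cochain[OF q p]] lin[OF q p] by simp
    thus "(\<phi>, \<xi>) \<in> cohom_rel M n \<longleftrightarrow> (\<Theta> n \<phi>, \<Theta> n \<xi>) \<in> cohom_rel N n"
      unfolding cohom_rel_def using Z[OF p] Z[OF q] by auto
  qed
  have Zimg: "\<Theta> n ` cocycles M n = cocycles N n"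
  proof
    show "\<Theta> n ` cocycles M n \<subseteq> cocycles N n" using Z cocyc_coch by blast
    show "cocycles N n \<subseteq> \<Theta> n ` cocycles M n"
    proof
      fix \<phi>' assume a: "\<phi>' \<in> cocycles N n"
      then obtain \<phi> where "\<phi> \<in> cochains M n" "\<phi>' = \<Theta> n \<phi>" using img cocyc_coch by blast
      thus "\<phi>' \<in> \<Theta> n ` cocycles M n" using Z a by blast
    qed
  qed
  have cls: "\<Theta> n ` (cohom_rel M n `` {\<phi>}) = cohom_rel N n `` {\<Theta> n \<phi>}" if p: "\<phi> \<in> cocycles M n" for \<phi>
  proof
    have pc: "\<phi> \<in> cochains M n" using p cocyc_coch by blast
    show "\<Theta> n ` (cohom_rel M n `` {\<phi>}) \<subseteq> cohom_rel N n `` {\<Theta> n \<phi>}"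
    proof
      fix y assume "y \<in> \<Theta> n ` (cohom_rel M n `` {\<phi>})"
      then obtain \<xi> where "(\<phi>, \<xi>) \<in> cohom_rel M n" "y = \<Theta> n \<xi>" by auto
      moreover have "\<xi> \<in> cochains M n" using calculation rel_sub cocyc_coch by blast
      ultimately show "y \<in> cohom_rel N n `` {\<Theta> n \<phi>}" using R[OF pc] by auto
    qed
    show "cohom_rel N n `` {\<Theta> n \<phi>} \<subseteq> \<Theta> n ` (cohom_rel M n `` {\<phi>})"
    proof
      fix \<eta> assume e: "\<eta> \<in> cohom_rel N n `` {\<Theta> n \<phi>}"
      hence "\<eta> \<in> cochains N n" using rel_sub cocyc_coch by blast
      then obtain \<xi> where x: "\<xi> \<in> cochains M n" "\<eta> = \<Theta> n \<xi>" using img by blast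
      hence "(\<phi>, \<xi>) \<in> cohom_rel M n" using R[OF pc x(1)] e by auto
      thus "\<eta> \<in> \<Theta> n ` (cohom_rel M n `` {\<phi>})" using x by auto
    qed
  qed
  define F where "F = (\<lambda>P. \<Theta> n ` P)"
  have "bij_betw F (cohomology M n) (cohomology N n)"
    unfolding bij_betw_def
  proof
    show "inj_on F (cohomology M n)"
    proof (rule inj_onI)
      fix P Q assume P: "P \<in> cohomology M n" and Q: "Q \<in> cohomology M n" and e: "F P = F Q"
      have "P \<subseteq> cochains M n" "Q \<subseteq> cochains M n"
        using P Q by (auto dest: cohom_sub)
      thus "P = Q" using e inj_on_image_eq_iff[OF inj] unfolding F_def by blast
    qed
    show "F ` cohomology M n = cohomology N n"
    proof
      show "F ` cohomology M n \<subseteq> cohomology N n"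
      proof
        fix X assume "X \<in> F ` cohomology M n"
        then obtain \<phi> where p: "\<phi> \<in> cocycles M n" "X = F (cohom_rel M n `` {\<phi>})"
          unfolding cohomology_def by (auto elim!: quotientE)
        hence "X = cohom_rel N n `` {\<Theta> n \<phi>}" unfolding F_def using cls by simp
        moreover have "\<Theta> n \<phi> \<in> cocycles N n" using p Zimg by blast
        ultimately show "X \<in> cohomology N n" unfolding cohomology_def by (auto intro: quotientI)
      qed
      show "cohomology N n \<subseteq> F ` cohomology M n"
      proof
        fix X assume "X \<in> cohomology N n"
        then obtain \<phi>' where p: "\<phi>' \<in> cocycles N n" "X = cohom_rel N n `` {\<phi>'}"
          unfolding cohomology_def by (auto elim!: quotientE)
        then obtain \<phi> where q: "\<phi> \<in> cocycles M n" "\<phi>' = \<Theta> n \<phi>" using Zimg by blast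
        hence "X = F (cohom_rel M n `` {\<phi>})" using p cls unfolding F_def by simp
        thus "X \<in> F ` cohomology M n" using q unfolding cohomology_def by (auto intro: quotientI)
      qed
    qed
  qed
  moreover have "\<forall>P\<in>cohomology M n. \<forall>Q\<in>cohomology M n. \<forall>c. F (hlin c P Q) = hlin c (F P) (F Q)"
  proof (intro ballI allI)
    fix P Q c assume P: "P \<in> cohomology M n" and Q: "Q \<in> cohomology M n"
    have s: "P \<subseteq> cochains M n" "Q \<subseteq> cochains M n"
      using P Q by (auto dest: cohom_sub)
    show "F (hlin c P Q) = hlin c (F P) (F Q)"
      unfolding F_def hlin_def
    proof (intro equalityI subsetI)
      fix y assume "y \<in> \<Theta> n ` {clin c p q |p q. p \<in> P \<and> q \<in> Q}"
      then obtain p q where pq: "p \<in> P" "q \<in> Q" "y = \<Theta> n (clin c p q)" by auto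
      have "y = clin c (\<Theta> n p) (\<Theta> n q)" using pq lin[of p n q c] s by auto
      moreover have "\<Theta> n p \<in> \<Theta> n ` P" "\<Theta> n q \<in> \<Theta> n ` Q" using pq by auto
      ultimately show "y \<in> {clin c p q |p q. p \<in> \<Theta> n ` P \<and> q \<in> \<Theta> n ` Q}" by blast
    next
      fix y assume "y \<in> {clin c p q |p q. p \<in> \<Theta> n ` P \<and> q \<in> \<Theta> n ` Q}"
      then obtain p q where pq: "p \<in> P" "q \<in> Q" "y = clin c (\<Theta> n p) (\<Theta> n q)" by auto
      have "p \<in> cochains M n" "q \<in> cochains M n" using pq s by auto
      hence "y = \<Theta> n (clin c p q)" using pq lin[of p n q c] by simp
      moreover have "clin c p q \<in> {clin c p q |p q. p \<in> P \<and> q \<in> Q}" using pq by blast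
      ultimately show "y \<in> \<Theta> n ` {clin c p q |p q. p \<in> P \<and> q \<in> Q}" by blast
    qed
  qed
  ultimately show ?thesis unfolding cohom_iso_def by blast
qed

lemma cohom_iso_trans:
  assumes "cohom_iso A B n" "cohom_iso B C n" shows "cohom_iso A C n"
proof -
  obtain F where F: "bij_betw F (cohomology A n) (cohomology B n)"
    "\<forall>P\<in>cohomology A n. \<forall>Q\<in>cohomology A n. \<forall>c. F (hlin c P Q) = hlin c (F P) (F Q)"
    using assms(1) unfolding cohom_iso_def by blast
  obtain G where G: "bij_betw G (cohomology B n) (cohomology C n)"
    "\<forall>P\<in>cohomology B n. \<forall>Q\<in>cohomology B n. \<forall>c. G (hlin c P Q) = hlin c (G P) (G Q)"
    using assms(2) unfolding cohom_iso_def by blast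
  have "bij_betw (G \<circ> F) (cohomology A n) (cohomology C n)" using F(1) G(1) by (rule bij_betw_trans)
  moreover have "\<forall>P\<in>cohomology A n. \<forall>Q\<in>cohomology A n. \<forall>c. (G \<circ> F) (hlin c P Q) = hlin c ((G \<circ> F) P) ((G \<circ> F) Q)"
    using F G bij_betwE[OF F(1)] by simp
  ultimately show ?thesis unfolding cohom_iso_def by blast
qed




lemma valid_tl: "valid (Suc n) as \<Longrightarrow> valid n (tl as)"
  unfolding valid_def by (cases as) auto
lemma valid_butlast: "valid (Suc n) as \<Longrightarrow> valid n (butlast as)"
  unfolding valid_def by (auto dest: in_set_butlastD)
lemma valid_nth: "valid n as \<Longrightarrow> i < n \<Longrightarrow> as ! i \<in> l1"
  unfolding valid_def by auto
lemma valid_hd: "valid (Suc n) as \<Longrightarrow> hd as \<in> l1"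
  unfolding valid_def by (cases as) auto
lemma valid_last: "valid (Suc n) as \<Longrightarrow> last as \<in> l1"
  unfolding valid_def by (cases as rule: rev_cases) auto

lemma prod_hd: "as \<noteq> [] \<Longrightarrow> prod_list (map f as) = f (hd as) * prod_list (map f (tl as))"
  by (cases as) auto
lemma prod_last: "as \<noteq> [] \<Longrightarrow> prod_list (map f as) = prod_list (map f (butlast as)) * (f (last as) :: real)"
  by (cases as rule: rev_cases) auto

lemma hd_upd: "as \<noteq> [] \<Longrightarrow> hd (as[i := v]) = (if i = 0 then v else hd as)"
  by (cases as; cases i) auto
lemma tl_upd: "tl (as[i := v]) = (if i = 0 then tl as else (tl as)[i - 1 := v])"
  by (cases as; cases i) auto

lemma length_merge: "1 \<le> j \<Longrightarrow> j < length as \<Longrightarrow> length (merge j as) = length as - 1"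
  unfolding merge_def by simp

lemma merge_nth: assumes "1 \<le> j" "j < length as" "k < length as - 1"
  shows "merge j as ! k = (if k < j - 1 then as ! k else if k = j - 1 then conv (as ! (j - 1)) (as ! j) else as ! Suc k)"
  using assms unfolding merge_def by (auto simp: nth_append min_def)

lemma valid_merge: assumes "valid (Suc n) as" "1 \<le> j" "j \<le> n" shows "valid n (merge j as)"
proof -
  have l: "length as = Suc n" using assms unfolding valid_def by simp
  have "\<forall>k<n. merge j as ! k \<in> l1"
    using assms l by (auto simp: merge_nth valid_nth intro!: conv_l1)
  thus ?thesis unfolding valid_def using length_merge[of j as] l assms by (auto simp: in_set_conv_nth)
qed

lemma split3: "1 \<le> j \<Longrightarrow> j < length as \<Longrightarrow> as = take (j - 1) as @ as ! (j - 1) # as ! j # drop (j + 1) as"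
proof -
  assume a: "1 \<le> j" "j < length as"
  have d1: "drop (j - 1) as = as ! (j - 1) # drop j as"
    using Cons_nth_drop_Suc[of "j - 1" as] a by simp
  have d2: "drop j as = as ! j # drop (j + 1) as"
    using Cons_nth_drop_Suc[of j as] a by simp
  have "as = take (j - 1) as @ drop (j - 1) as" by simp
  thus ?thesis unfolding d1 d2 .
qed

lemma prod_merge: assumes "valid (Suc n) as" "1 \<le> j" "j \<le> n"
  shows "prod_list (map l1norm (merge j as)) \<le> prod_list (map l1norm as)"
proof -
  have l: "j < length as" using assms unfolding valid_def by simp
  have a: "as ! (j - 1) \<in> l1" "as ! j \<in> l1" using assms l by (auto simp: valid_nth)
  let ?A = "prod_list (map l1norm (take (j - 1) as))" and ?B = "prod_list (map l1norm (drop (j + 1) as))"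
  have "prod_list (map l1norm (merge j as)) = ?A * l1norm (conv (as ! (j - 1)) (as ! j)) * ?B"
    unfolding merge_def by simp
  also have "\<dots> \<le> ?A * (l1norm (as ! (j - 1)) * l1norm (as ! j)) * ?B"
    by (intro mult_right_mono mult_left_mono conv_norm a prodnn)
  also have "\<dots> = prod_list (map l1norm as)"
    by (subst (3) split3[OF assms(2) l]) (simp add: mult_ac)
  finally show ?thesis .
qed

lemma merge_upd1: assumes "1 \<le> j" "j < length as" "i < j - 1"
  shows "merge j (as[i := u]) = (merge j as)[i := u]"
  using assms by (intro nth_equalityI) (auto simp: length_merge merge_nth nth_list_update)
lemma merge_upd2: assumes "1 \<le> j" "j < length as"
  shows "merge j (as[j - 1 := u]) = (merge j as)[j - 1 := conv u (as ! j)]"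
  using assms by (intro nth_equalityI) (auto simp: length_merge merge_nth nth_list_update)
lemma merge_upd3: assumes "1 \<le> j" "j < length as"
  shows "merge j (as[j := u]) = (merge j as)[j - 1 := conv (as ! (j - 1)) u]"
  using assms by (intro nth_equalityI) (auto simp: length_merge merge_nth nth_list_update)
lemma merge_upd4: assumes "1 \<le> j" "j < i" "i < length as"
  shows "merge j (as[i := u]) = (merge j as)[i - 1 := u]"
  using assms by (intro nth_equalityI) (auto simp: length_merge merge_nth nth_list_update)

definition goodM :: "('g::group_add) bimod \<Rightarrow> bool" where
  "goodM M \<longleftrightarrow> carr M \<subseteq> l1 \<and>
    (\<forall>x\<in>carr M. \<forall>y\<in>carr M. \<forall>c. vlin c x y \<in> carr M) \<and>
    (\<forall>a\<in>l1. \<forall>x\<in>carr M. lact M a x \<in> carr M \<and> ract M x a \<in> carr M \<and>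
        l1norm (lact M a x) \<le> l1norm a * l1norm x \<and> l1norm (ract M x a) \<le> l1norm a * l1norm x) \<and>
    (\<forall>a\<in>l1. \<forall>b\<in>l1. \<forall>x\<in>carr M. \<forall>c. lact M (vlin c a b) x = vlin c (lact M a x) (lact M b x) \<and>
        ract M x (vlin c a b) = vlin c (ract M x a) (ract M x b)) \<and>
    (\<forall>a\<in>l1. \<forall>x\<in>carr M. \<forall>y\<in>carr M. \<forall>c. lact M a (vlin c x y) = vlin c (lact M a x) (lact M a y) \<and>
        ract M (vlin c x y) a = vlin c (ract M x a) (ract M y a))"

definition gterm :: "'g bimod \<Rightarrow> nat \<Rightarrow> ('g vec list \<Rightarrow> 'g vec \<Rightarrow> complex) \<Rightarrow> bool" where
  "gterm M m T \<longleftrightarrow> (\<exists>K. \<forall>as. valid m as \<longrightarrow>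
      (\<forall>x\<in>carr M. \<forall>y\<in>carr M. \<forall>c. T as (vlin c x y) = c * T as x + T as y) \<and>
      (\<forall>x. x \<notin> carr M \<longrightarrow> T as x = 0) \<and>
      (\<forall>x\<in>carr M. norm (T as x) \<le> K * prod_list (map l1norm as) * l1norm x)) \<and>
    (\<forall>as i a b c x. valid m as \<longrightarrow> i < m \<longrightarrow> a \<in> l1 \<longrightarrow> b \<in> l1 \<longrightarrow>
      T (as[i := vlin c a b]) x = c * T (as[i := a]) x + T (as[i := b]) x)"

lemma gtermI:
  fixes T :: "'g vec list \<Rightarrow> 'g vec \<Rightarrow> complex"
  assumes "\<And>as x y c. valid m as \<Longrightarrow> x \<in> carr M \<Longrightarrow> y \<in> carr M \<Longrightarrow> T as (vlin c x y) = c * T as x + T as y"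
    "\<And>as x. valid m as \<Longrightarrow> x \<notin> carr M \<Longrightarrow> T as x = 0"
    "\<And>as x. valid m as \<Longrightarrow> x \<in> carr M \<Longrightarrow> norm (T as x) \<le> K * prod_list (map l1norm as) * l1norm x"
    "\<And>as i (a::'g vec) b c x. valid m as \<Longrightarrow> i < m \<Longrightarrow> a \<in> l1 \<Longrightarrow> b \<in> l1 \<Longrightarrow>
      T (as[i := vlin c a b]) x = c * T (as[i := a]) x + T (as[i := b]) x"
  shows "gterm M m T"
  unfolding gterm_def using assms by blast

lemma gterm_comb:
  fixes T U :: "'g vec list \<Rightarrow> 'g vec \<Rightarrow> complex"
  assumes t: "gterm M m T" and u: "gterm M m U"
  shows "gterm M m (\<lambda>as x. d * T as x + U as x)"
proof -
  obtain K1 where K1: "\<And>as. valid m as \<Longrightarrow>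
      (\<forall>x\<in>carr M. \<forall>y\<in>carr M. \<forall>c. T as (vlin c x y) = c * T as x + T as y) \<and>
      (\<forall>x. x \<notin> carr M \<longrightarrow> T as x = 0) \<and>
      (\<forall>x\<in>carr M. norm (T as x) \<le> K1 * prod_list (map l1norm as) * l1norm x)"
    using t unfolding gterm_def by blast
  obtain K2 where K2: "\<And>as. valid m as \<Longrightarrow>
      (\<forall>x\<in>carr M. \<forall>y\<in>carr M. \<forall>c. U as (vlin c x y) = c * U as x + U as y) \<and>
      (\<forall>x. x \<notin> carr M \<longrightarrow> U as x = 0) \<and>
      (\<forall>x\<in>carr M. norm (U as x) \<le> K2 * prod_list (map l1norm as) * l1norm x)"
    using u unfolding gterm_def by blast
  have mT: "\<And>as i a b c x. valid m as \<Longrightarrow> i < m \<Longrightarrow> a \<in> l1 \<Longrightarrow> b \<in> l1 \<Longrightarrow>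
      T (as[i := vlin c a b]) x = c * T (as[i := a]) x + T (as[i := b]) x" using t unfolding gterm_def by blast
  have mU: "\<And>as i a b c x. valid m as \<Longrightarrow> i < m \<Longrightarrow> a \<in> l1 \<Longrightarrow> b \<in> l1 \<Longrightarrow>
      U (as[i := vlin c a b]) x = c * U (as[i := a]) x + U (as[i := b]) x" using u unfolding gterm_def by blast
  show ?thesis
  proof (rule gtermI[where K="norm d * max K1 0 + max K2 0"])
    fix as :: "'g vec list" and x y c assume "valid m as" "x \<in> carr M" "y \<in> carr M"
    thus "d * T as (vlin c x y) + U as (vlin c x y) = c * (d * T as x + U as x) + (d * T as y + U as y)"
      using K1 K2 by (simp add: algebra_simps)
  next
    fix as :: "'g vec list" and x assume "valid m as" "x \<notin> carr M"
    thus "d * T as x + U as x = 0" using K1 K2 by simp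
  next
    fix as :: "'g vec list" and x assume v: "valid m as" and x: "x \<in> carr M"
    have P: "0 \<le> prod_list (map l1norm as) * l1norm x" by (simp add: prodnn l1norm_nonneg)
    have "norm (d * T as x + U as x) \<le> norm d * norm (T as x) + norm (U as x)"
      by (metis norm_mult norm_triangle_ineq)
    also have "\<dots> \<le> norm d * (max K1 0 * (prod_list (map l1norm as) * l1norm x)) + max K2 0 * (prod_list (map l1norm as) * l1norm x)"
    proof (intro add_mono mult_left_mono)
      have "norm (T as x) \<le> K1 * (prod_list (map l1norm as) * l1norm x)" using K1[OF v] x by (simp add: mult.assoc)
      also have "\<dots> \<le> max K1 0 * (prod_list (map l1norm as) * l1norm x)" using P by (intro mult_right_mono) auto
      finally show "norm (T as x) \<le> max K1 0 * (prod_list (map l1norm as) * l1norm x)" .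
      have "norm (U as x) \<le> K2 * (prod_list (map l1norm as) * l1norm x)" using K2[OF v] x by (simp add: mult.assoc)
      also have "\<dots> \<le> max K2 0 * (prod_list (map l1norm as) * l1norm x)" using P by (intro mult_right_mono) auto
      finally show "norm (U as x) \<le> max K2 0 * (prod_list (map l1norm as) * l1norm x)" .
    qed simp
    finally show "norm (d * T as x + U as x) \<le> (norm d * max K1 0 + max K2 0) * prod_list (map l1norm as) * l1norm x"
      by (simp add: algebra_simps)
  next
    fix as :: "'g vec list" and i and a b :: "'g vec" and c x assume "valid m as" "i < m" "a \<in> l1" "b \<in> l1"
    thus "d * T (as[i := vlin c a b]) x + U (as[i := vlin c a b]) x =
       c * (d * T (as[i := a]) x + U (as[i := a]) x) + (d * T (as[i := b]) x + U (as[i := b]) x)"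
      using mT mU by (simp add: algebra_simps)
  qed
qed

lemma gterm_zero: "gterm M m (\<lambda>as x. 0)"
  by (rule gtermI[where K=0]) (auto simp: prodnn l1norm_nonneg)

lemma gterm_sum:
  fixes T :: "nat \<Rightarrow> 'g vec list \<Rightarrow> 'g vec \<Rightarrow> complex"
  assumes "finite J" "\<And>j. j \<in> J \<Longrightarrow> gterm M m (T j)"
  shows "gterm M m (\<lambda>as x. \<Sum>j\<in>J. T j as x)"
  using assms
proof (induction J rule: finite_induct)
  case empty thus ?case by (simp add: gterm_zero)
next
  case (insert j J)
  have "gterm M m (\<lambda>as x. 1 * T j as x + (\<Sum>j\<in>J. T j as x))"
    by (rule gterm_comb) (use insert in auto)
  thus ?case using insert by simp
qed

lemma gterm_cochain:
  fixes T :: "'g vec list \<Rightarrow> 'g vec \<Rightarrow> complex"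
  assumes "gterm M m T"
  shows "(\<lambda>as. if valid m as then T as else (\<lambda>_. 0)) \<in> cochains M m"
proof -
  obtain K where K: "\<And>as. valid m as \<Longrightarrow>
      (\<forall>x\<in>carr M. \<forall>y\<in>carr M. \<forall>c. T as (vlin c x y) = c * T as x + T as y) \<and>
      (\<forall>x. x \<notin> carr M \<longrightarrow> T as x = 0) \<and>
      (\<forall>x\<in>carr M. norm (T as x) \<le> K * prod_list (map l1norm as) * l1norm x)"
    using assms unfolding gterm_def by blast
  have mT: "\<And>as i a b c x. valid m as \<Longrightarrow> i < m \<Longrightarrow> a \<in> l1 \<Longrightarrow> b \<in> l1 \<Longrightarrow>
      T (as[i := vlin c a b]) x = c * T (as[i := a]) x + T (as[i := b]) x" using assms unfolding gterm_def by blast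
  show ?thesis
  proof (rule cochI[where K=K])
    fix as :: "'g vec list" assume v: "valid m as"
    show "(if valid m as then T as else (\<lambda>_. 0)) \<in> dualset (carr M)"
      using K[OF v] v by (intro dualI[where K="K * prod_list (map l1norm as)"]) auto
  next
    fix as :: "'g vec list" and i and a b :: "'g vec" and c
    assume "valid m as" "i < m" "a \<in> l1" "b \<in> l1"
    thus "(if valid m (as[i := vlin c a b]) then T (as[i := vlin c a b]) else (\<lambda>_. 0)) =
      (\<lambda>x. c * (if valid m (as[i := a]) then T (as[i := a]) else (\<lambda>_. 0)) x +
           (if valid m (as[i := b]) then T (as[i := b]) else (\<lambda>_. 0)) x)"
      using mT by (simp add: valid_upd vlin_l1 fun_eq_iff)
  next
    show "cbound M m (\<lambda>as. if valid m as then T as else (\<lambda>_. 0)) K"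
      unfolding cbound_def using K by auto
  qed auto
qed




lemma gterm_scale: "gterm M m T \<Longrightarrow> gterm M m (\<lambda>as x. d * T as x)"
  using gterm_comb[OF _ gterm_zero, of M m T d] by simp
lemma gterm_add: "gterm M m T \<Longrightarrow> gterm M m U \<Longrightarrow> gterm M m (\<lambda>as x. T as x + U as x)"
  using gterm_comb[of M m T U 1] by simp

lemma goodD:
  assumes "goodM M"
  shows "carr M \<subseteq> l1"
    "\<And>x y c. x \<in> carr M \<Longrightarrow> y \<in> carr M \<Longrightarrow> vlin c x y \<in> carr M"
    "\<And>a x. a \<in> l1 \<Longrightarrow> x \<in> carr M \<Longrightarrow> lact M a x \<in> carr M"
    "\<And>a x. a \<in> l1 \<Longrightarrow> x \<in> carr M \<Longrightarrow> ract M x a \<in> carr M"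
    "\<And>a x. a \<in> l1 \<Longrightarrow> x \<in> carr M \<Longrightarrow> l1norm (lact M a x) \<le> l1norm a * l1norm x"
    "\<And>a x. a \<in> l1 \<Longrightarrow> x \<in> carr M \<Longrightarrow> l1norm (ract M x a) \<le> l1norm a * l1norm x"
    "\<And>a b x c. a \<in> l1 \<Longrightarrow> b \<in> l1 \<Longrightarrow> x \<in> carr M \<Longrightarrow> lact M (vlin c a b) x = vlin c (lact M a x) (lact M b x)"
    "\<And>a b x c. a \<in> l1 \<Longrightarrow> b \<in> l1 \<Longrightarrow> x \<in> carr M \<Longrightarrow> ract M x (vlin c a b) = vlin c (ract M x a) (ract M x b)"
    "\<And>a x y c. a \<in> l1 \<Longrightarrow> x \<in> carr M \<Longrightarrow> y \<in> carr M \<Longrightarrow> lact M a (vlin c x y) = vlin c (lact M a x) (lact M a y)"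
    "\<And>a x y c. a \<in> l1 \<Longrightarrow> x \<in> carr M \<Longrightarrow> y \<in> carr M \<Longrightarrow> ract M (vlin c x y) a = vlin c (ract M x a) (ract M y a)"
  using assms unfolding goodM_def by blast+

lemma gT1:
  fixes M :: "('g::group_add) bimod" and \<phi> :: "'g cochain"
  assumes g: "goodM M" and p: "\<phi> \<in> cochains M n"
  shows "gterm M (Suc n) (\<lambda>as x. dlact M (hd as) (\<phi> (tl as)) x)"
proof -
  obtain K where K: "cbound M n \<phi> K" "K \<ge> 0" using cochD4'[OF p] by blast
  show ?thesis
  proof (rule gtermI[where K=K])
    fix as :: "'g vec list" and x y c assume v: "valid (Suc n) as" and x: "x \<in> carr M" and y: "y \<in> carr M"
    have a: "hd as \<in> l1" by (rule valid_hd[OF v])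
    show "dlact M (hd as) (\<phi> (tl as)) (vlin c x y) = c * dlact M (hd as) (\<phi> (tl as)) x + dlact M (hd as) (\<phi> (tl as)) y"
      unfolding dlact_def using x y goodD(2,4,10)[OF g] a dualD1[OF cochD1[OF p valid_tl[OF v]]] by simp
  next
    fix as :: "'g vec list" and x assume "x \<notin> carr M"
    thus "dlact M (hd as) (\<phi> (tl as)) x = 0" unfolding dlact_def by simp
  next
    fix as :: "'g vec list" and x assume v: "valid (Suc n) as" and x: "x \<in> carr M"
    have a: "hd as \<in> l1" by (rule valid_hd[OF v])
    have ne: "as \<noteq> []" using v unfolding valid_def by auto
    have "norm (dlact M (hd as) (\<phi> (tl as)) x) = norm (\<phi> (tl as) (ract M x (hd as)))"
      unfolding dlact_def using x by simp
    also have "\<dots> \<le> K * prod_list (map l1norm (tl as)) * l1norm (ract M x (hd as))"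
      by (rule cboundD[OF K(1) valid_tl[OF v] goodD(4)[OF g a x]])
    also have "\<dots> \<le> K * prod_list (map l1norm (tl as)) * (l1norm (hd as) * l1norm x)"
      by (intro mult_left_mono goodD(6)[OF g a x] mult_nonneg_nonneg K(2) prodnn)
    also have "\<dots> = K * prod_list (map l1norm as) * l1norm x"
      using prod_hd[OF ne, of l1norm] by (simp add: mult_ac)
    finally show "norm (dlact M (hd as) (\<phi> (tl as)) x) \<le> K * prod_list (map l1norm as) * l1norm x" .
  next
    fix as :: "'g vec list" and i and a b :: "'g vec" and c x
    assume v: "valid (Suc n) as" and i: "i < Suc n" and a: "a \<in> l1" and b: "b \<in> l1"
    have ne: "as \<noteq> []" using v unfolding valid_def by auto
    show "dlact M (hd (as[i := vlin c a b])) (\<phi> (tl (as[i := vlin c a b]))) x =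
          c * dlact M (hd (as[i := a])) (\<phi> (tl (as[i := a]))) x + dlact M (hd (as[i := b])) (\<phi> (tl (as[i := b]))) x"
    proof (cases "i = 0")
      case True
      show ?thesis unfolding hd_upd[OF ne] tl_upd using True
        unfolding dlact_def using goodD(4,8)[OF g a] goodD(4)[OF g b] a b dualD1[OF cochD1[OF p valid_tl[OF v]]]
        by simp
    next
      case False
      have "i - 1 < n" using i False by simp
      thus ?thesis unfolding hd_upd[OF ne] tl_upd using False cochD3[OF p valid_tl[OF v] _ a b]
        unfolding dlact_def by simp
    qed
  qed
qed

lemma gT2:
  fixes M :: "('g::group_add) bimod" and \<phi> :: "'g cochain"
  assumes g: "goodM M" and p: "\<phi> \<in> cochains M n"
  shows "gterm M (Suc n) (\<lambda>as x. dract M (\<phi> (butlast as)) (last as) x)"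
proof -
  obtain K where K: "cbound M n \<phi> K" "K \<ge> 0" using cochD4'[OF p] by blast
  show ?thesis
  proof (rule gtermI[where K=K])
    fix as :: "'g vec list" and x y c assume v: "valid (Suc n) as" and x: "x \<in> carr M" and y: "y \<in> carr M"
    have a: "last as \<in> l1" by (rule valid_last[OF v])
    show "dract M (\<phi> (butlast as)) (last as) (vlin c x y) = c * dract M (\<phi> (butlast as)) (last as) x + dract M (\<phi> (butlast as)) (last as) y"
      unfolding dract_def using x y goodD(2,3,9)[OF g] a dualD1[OF cochD1[OF p valid_butlast[OF v]]] by simp
  next
    fix as :: "'g vec list" and x assume "x \<notin> carr M"
    thus "dract M (\<phi> (butlast as)) (last as) x = 0" unfolding dract_def by simp
  next
    fix as :: "'g vec list" and x assume v: "valid (Suc n) as" and x: "x \<in> carr M"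
    have a: "last as \<in> l1" by (rule valid_last[OF v])
    have ne: "as \<noteq> []" using v unfolding valid_def by auto
    have "norm (dract M (\<phi> (butlast as)) (last as) x) = norm (\<phi> (butlast as) (lact M (last as) x))"
      unfolding dract_def using x by simp
    also have "\<dots> \<le> K * prod_list (map l1norm (butlast as)) * l1norm (lact M (last as) x)"
      by (rule cboundD[OF K(1) valid_butlast[OF v] goodD(3)[OF g a x]])
    also have "\<dots> \<le> K * prod_list (map l1norm (butlast as)) * (l1norm (last as) * l1norm x)"
      by (intro mult_left_mono goodD(5)[OF g a x] mult_nonneg_nonneg K(2) prodnn)
    also have "\<dots> = K * prod_list (map l1norm as) * l1norm x"
      using prod_last[OF ne, of l1norm] by (simp add: mult_ac)
    finally show "norm (dract M (\<phi> (butlast as)) (last as) x) \<le> K * prod_list (map l1norm as) * l1norm x" .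
  next
    fix as :: "'g vec list" and i and a b :: "'g vec" and c x
    assume v: "valid (Suc n) as" and i: "i < Suc n" and a: "a \<in> l1" and b: "b \<in> l1"
    have ne: "as \<noteq> []" and len: "length as = Suc n" using v unfolding valid_def by auto
    show "dract M (\<phi> (butlast (as[i := vlin c a b]))) (last (as[i := vlin c a b])) x =
          c * dract M (\<phi> (butlast (as[i := a]))) (last (as[i := a])) x + dract M (\<phi> (butlast (as[i := b]))) (last (as[i := b])) x"
    proof (cases "i = n")
      case True
      show ?thesis unfolding last_list_update[OF ne] butlast_list_update using True len
        unfolding dract_def using goodD(3,7)[OF g a] goodD(3)[OF g b] a b dualD1[OF cochD1[OF p valid_butlast[OF v]]]
        by simp
    next
      case False
      have "i < n" using i False by simp
      thus ?thesis unfolding last_list_update[OF ne] butlast_list_update using False len cochD3[OF p valid_butlast[OF v] _ a b]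
        unfolding dract_def by simp
    qed
  qed
qed

lemma gTm:
  fixes M :: "('g::group_add) bimod" and \<phi> :: "'g cochain"
  assumes p: "\<phi> \<in> cochains M n" and j: "1 \<le> j" "j \<le> n"
  shows "gterm M (Suc n) (\<lambda>as x. \<phi> (merge j as) x)"
proof -
  obtain K where K: "cbound M n \<phi> K" "K \<ge> 0" using cochD4'[OF p] by blast
  show ?thesis
  proof (rule gtermI[where K=K])
    fix as :: "'g vec list" and x y c assume v: "valid (Suc n) as" and x: "x \<in> carr M" and y: "y \<in> carr M"
    show "\<phi> (merge j as) (vlin c x y) = c * \<phi> (merge j as) x + \<phi> (merge j as) y"
      by (rule dualD1[OF cochD1[OF p valid_merge[OF v j]] x y])
  next
    fix as :: "'g vec list" and x assume v: "valid (Suc n) as" and "x \<notin> carr M"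
    thus "\<phi> (merge j as) x = 0" using dualD0[OF cochD1[OF p valid_merge[OF v j]]] by simp
  next
    fix as :: "'g vec list" and x assume v: "valid (Suc n) as" and x: "x \<in> carr M"
    have "norm (\<phi> (merge j as) x) \<le> K * prod_list (map l1norm (merge j as)) * l1norm x"
      by (rule cboundD[OF K(1) valid_merge[OF v j] x])
    also have "\<dots> \<le> K * prod_list (map l1norm as) * l1norm x"
      by (intro mult_right_mono mult_left_mono prod_merge[OF v j] K(2) l1norm_nonneg)
    finally show "norm (\<phi> (merge j as) x) \<le> K * prod_list (map l1norm as) * l1norm x" .
  next
    fix as :: "'g vec list" and i and a b :: "'g vec" and c x
    assume v: "valid (Suc n) as" and i: "i < Suc n" and a: "a \<in> l1" and b: "b \<in> l1"
    have len: "length as = Suc n" using v unfolding valid_def by auto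
    have jl: "j < length as" using j len by simp
    have vm: "valid n (merge j as)" by (rule valid_merge[OF v j])
    have aj: "as ! j \<in> l1" "as ! (j - 1) \<in> l1" using v j len by (auto simp: valid_nth)
    consider "i < j - 1" | "i = j - 1" | "i = j" | "j < i" by linarith
    thus "\<phi> (merge j (as[i := vlin c a b])) x = c * \<phi> (merge j (as[i := a])) x + \<phi> (merge j (as[i := b])) x"
    proof cases
      case 1
      have "i < n" using 1 j by simp
      thus ?thesis unfolding merge_upd1[OF j(1) jl 1] using cochD3[OF p vm _ a b] by simp
    next
      case 2
      have k: "j - 1 < n" using j by simp
      have e: "conv (vlin c a b) (as ! j) = vlin c (conv a (as ! j)) (conv b (as ! j))"
        by (rule conv_lin1[OF a b aj(1)])
      show ?thesis unfolding 2 merge_upd2[OF j(1) jl] e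
        using cochD3[OF p vm k conv_l1[OF a aj(1)] conv_l1[OF b aj(1)]] by simp
    next
      case 3
      have k: "j - 1 < n" using j by simp
      have e: "conv (as ! (j - 1)) (vlin c a b) = vlin c (conv (as ! (j - 1)) a) (conv (as ! (j - 1)) b)"
        by (rule conv_lin2[OF aj(2) a b])
      show ?thesis unfolding 3 merge_upd3[OF j(1) jl] e
        using cochD3[OF p vm k conv_l1[OF aj(2) a] conv_l1[OF aj(2) b]] by simp
    next
      case 4
      have k: "i - 1 < n" using 4 i by simp
      have il: "i < length as" using i len by simp
      show ?thesis unfolding merge_upd4[OF j(1) 4 il] using cochD3[OF p vm k a b] by simp
    qed
  qed
qed

lemma cobound_cochain:
  fixes M :: "('g::group_add) bimod" and \<phi> :: "'g cochain"
  assumes g: "goodM M" and p: "\<phi> \<in> cochains M n"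
  shows "cobound M n \<phi> \<in> cochains M (Suc n)"
proof -
  define E where "E = (\<lambda>as x. dlact M (hd as) (\<phi> (tl as)) x
          + (\<Sum>i = 1..n. (-1) ^ i * \<phi> (merge i as) x)
          + (-1) ^ (Suc n) * dract M (\<phi> (butlast as)) (last as) x)"
  have "gterm M (Suc n) E" unfolding E_def
    by (intro gterm_add gT1[OF g p] gterm_scale gT2[OF g p] gterm_sum gTm[OF p]) auto
  from gterm_cochain[OF this] show ?thesis unfolding E_def cobound_def .
qed




lemma I0_l1: "x \<in> I0 \<Longrightarrow> x \<in> l1" unfolding I0_def by simp
lemma I0_aug: "x \<in> I0 \<Longrightarrow> aug x = 0" unfolding I0_def by simp
lemma I0I: "x \<in> l1 \<Longrightarrow> aug x = 0 \<Longrightarrow> x \<in> I0" unfolding I0_def by simp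
lemma I0_vlin: "x \<in> I0 \<Longrightarrow> y \<in> I0 \<Longrightarrow> vlin c x y \<in> I0"
  by (intro I0I vlin_l1) (auto simp: I0_l1 aug_vlin I0_aug)

lemma twr_vlin1: assumes "a \<in> l1" "b \<in> l1" shows "twr x (vlin c a b) = vlin c (twr x a) (twr x b)"
  unfolding twr_def by (simp only: aug_vlin[OF assms]) (simp add: vlin_def fun_eq_iff algebra_simps)
lemma twr_vlin2: "twr (vlin c x y) a = vlin c (twr x a) (twr y a)"
  unfolding twr_def vlin_def by (simp add: fun_eq_iff algebra_simps)
lemma twr_I0: "a \<in> l1 \<Longrightarrow> x \<in> I0 \<Longrightarrow> twr x a \<in> I0"
  unfolding twr_def by (intro I0I scale_l1) (auto simp: I0_l1 aug_scale I0_aug)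
lemma twr_norm: "a \<in> l1 \<Longrightarrow> l1norm (twr x a) \<le> l1norm a * l1norm x"
  unfolding twr_def l1norm_scale by (intro mult_right_mono norm_aug l1norm_nonneg)
lemma twl_I0: "a \<in> l1 \<Longrightarrow> x \<in> I0 \<Longrightarrow> twl a x \<in> I0"
  by (intro I0I twl_l1) (auto simp: I0_l1 twl_aug I0_aug)
lemma conv_I0l: "a \<in> l1 \<Longrightarrow> x \<in> I0 \<Longrightarrow> conv a x \<in> I0"
  by (intro I0I conv_l1) (auto simp: I0_l1 conv_aug I0_aug)
lemma conv_I0r: "a \<in> l1 \<Longrightarrow> x \<in> I0 \<Longrightarrow> conv x a \<in> I0"
  by (intro I0I conv_l1) (auto simp: I0_l1 conv_aug I0_aug)

lemma good_I0mod: "goodM (I0mod :: ('g::group_add) bimod)"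
  unfolding goodM_def I0mod_def bimod.simps
proof (intro conjI ballI allI)
  show "I0 \<subseteq> l1" using I0_l1 by blast
  fix a x :: "'g vec" assume a: "a \<in> l1" and x: "x \<in> I0"
  show "conv a x \<in> I0" by (rule conv_I0l[OF a x])
  show "conv x a \<in> I0" by (rule conv_I0r[OF a x])
  show "l1norm (conv a x) \<le> l1norm a * l1norm x" by (rule conv_norm[OF a I0_l1[OF x]])
  show "l1norm (conv x a) \<le> l1norm a * l1norm x" using conv_norm[OF I0_l1[OF x] a] by (simp add: mult.commute)
qed (auto simp: I0_vlin I0_l1 conv_lin1 conv_lin2)

lemma good_I0tw: "goodM (I0tw :: ('g::group_add) bimod)"
  unfolding goodM_def I0tw_def bimod.simps
proof (intro conjI ballI allI)
  show "I0 \<subseteq> l1" using I0_l1 by blast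
  fix a x :: "'g vec" assume a: "a \<in> l1" and x: "x \<in> I0"
  show "twl a x \<in> I0" by (rule twl_I0[OF a x])
  show "twr x a \<in> I0" by (rule twr_I0[OF a x])
  show "l1norm (twl a x) \<le> l1norm a * l1norm x" by (rule twl_norm[OF a I0_l1[OF x]])
  show "l1norm (twr x a) \<le> l1norm a * l1norm x" by (rule twr_norm[OF a])
qed (auto simp: I0_vlin I0_l1 twl_lin1 twl_lin2 twr_vlin1 twr_vlin2)




lemma coch_eq_carr: "cochains I0mod n = cochains I0tw n"
  unfolding cochains_def cbound_def I0mod_def I0tw_def by simp
lemma cbound_eq_carr: "cbound I0mod n = cbound I0tw n"
  unfolding cbound_def I0mod_def I0tw_def by (simp add: fun_eq_iff)
lemma carr_I0mod: "carr I0mod = I0" unfolding I0mod_def by simp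
lemma carr_I0tw: "carr I0tw = I0" unfolding I0tw_def by simp

lemma lin_sum: assumes "f summable_on UNIV" "g summable_on UNIV"
  shows "(\<Sum>\<^sub>\<infinity>y. c * f y + g y) = c * infsum f UNIV + (infsum g UNIV :: complex)"
proof -
  have "(\<Sum>\<^sub>\<infinity>y. c * f y + g y) = (\<Sum>\<^sub>\<infinity>y. c * f y) + infsum g UNIV"
    by (rule infsum_add[OF summable_on_cmult_right[OF assms(1)] assms(2)])
  thus ?thesis by (simp only: infsum_cmult_right')
qed

definition Rop :: "('g::group_add \<Rightarrow> 'g) \<Rightarrow> nat \<Rightarrow> nat \<Rightarrow> 'g cochain \<Rightarrow> 'g cochain" where
  "Rop h n k \<Phi> = (\<lambda>as x. if valid n as \<and> x \<in> I0 then
      (\<Sum>\<^sub>\<infinity>g. (as ! k) g * \<Phi> (as[k := pt g]) (rt (h g) x)) else 0)"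

lemma Fbound:
  fixes \<Phi> :: "('g::group_add) cochain"
  assumes p: "\<Phi> \<in> cochains I0mod n" and B: "cbound I0mod n \<Phi> B" and v: "valid n as" and k: "k < n"
    and x: "x \<in> I0"
  shows "norm (\<Phi> (as[k := pt g]) (rt (h g) x)) \<le>
     B * (prod_list (map l1norm (take k as)) * prod_list (map l1norm (drop (Suc k) as))) * l1norm x"
proof -
  have len: "length as = n" using v unfolding valid_def by simp
  have "norm (\<Phi> (as[k := pt g]) (rt (h g) x)) \<le> B * prod_list (map l1norm (as[k := pt g])) * l1norm (rt (h g) x)"
    by (rule cboundD[OF B valid_upd[OF v pt_l1]]) (simp add: carr_I0mod rt_I0 x)
  also have "\<dots> = B * (prod_list (map l1norm (take k as)) * prod_list (map l1norm (drop (Suc k) as))) * l1norm x"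
    using prod_upd[of k as l1norm "pt g"] len k by (simp add: l1norm_pt l1norm_rt)
  finally show ?thesis .
qed

lemma Fsum:
  fixes \<Phi> :: "('g::group_add) cochain"
  assumes p: "\<Phi> \<in> cochains I0mod n" and v: "valid n as" and k: "k < n" and x: "x \<in> I0" and a: "a \<in> l1"
  shows "(\<lambda>g. norm (a g * \<Phi> (as[k := pt g]) (rt (h g) x))) summable_on UNIV"
proof -
  obtain B where B: "cbound I0mod n \<Phi> B" using cochD4[OF p] by blast
  define D where "D = B * (prod_list (map l1norm (take k as)) * prod_list (map l1norm (drop (Suc k) as))) * l1norm x"
  have F: "\<And>g. norm (\<Phi> (as[k := pt g]) (rt (h g) x)) \<le> D" unfolding D_def by (rule Fbound[OF p B v k x])
  show ?thesis
  proof (rule summable_on_comparison_test)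
    show "(\<lambda>g. norm (a g) * D) summable_on UNIV" using a unfolding l1_def by (intro summable_on_cmult_left) simp
    fix g show "norm (a g * \<Phi> (as[k := pt g]) (rt (h g) x)) \<le> norm (a g) * D"
      using F[of g] by (simp add: norm_mult mult_left_mono)
  qed simp
qed

lemma Rop_bound:
  fixes \<Phi> :: "('g::group_add) cochain"
  assumes p: "\<Phi> \<in> cochains I0mod n" and B: "cbound I0mod n \<Phi> B" and v: "valid n as" and k: "k < n"
    and x: "x \<in> I0"
  shows "norm (Rop h n k \<Phi> as x) \<le> B * prod_list (map l1norm as) * l1norm x"
proof -
  have len: "length as = n" using v unfolding valid_def by simp
  have a: "as ! k \<in> l1" using v k by (simp add: valid_nth)
  define D where "D = B * (prod_list (map l1norm (take k as)) * prod_list (map l1norm (drop (Suc k) as))) * l1norm x"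
  have F: "\<And>g. norm (\<Phi> (as[k := pt g]) (rt (h g) x)) \<le> D" unfolding D_def by (rule Fbound[OF p B v k x])
  have "norm (Rop h n k \<Phi> as x) = norm (\<Sum>\<^sub>\<infinity>g. (as ! k) g * \<Phi> (as[k := pt g]) (rt (h g) x))"
    unfolding Rop_def using v x by simp
  also have "\<dots> \<le> (\<Sum>\<^sub>\<infinity>g. norm ((as ! k) g * \<Phi> (as[k := pt g]) (rt (h g) x)))"
    by (rule norm_infsum_bound[OF Fsum[OF p v k x a]])
  also have "\<dots> \<le> (\<Sum>\<^sub>\<infinity>g. norm ((as ! k) g) * D)"
  proof (rule infsum_mono)
    show "(\<lambda>g. norm ((as ! k) g * \<Phi> (as[k := pt g]) (rt (h g) x))) summable_on UNIV" by (rule Fsum[OF p v k x a])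
    show "(\<lambda>g. norm ((as ! k) g) * D) summable_on UNIV" using a unfolding l1_def by (intro summable_on_cmult_left) simp
    fix g show "norm ((as ! k) g * \<Phi> (as[k := pt g]) (rt (h g) x)) \<le> norm ((as ! k) g) * D"
      using F[of g] by (simp add: norm_mult mult_left_mono)
  qed
  also have "\<dots> = l1norm (as ! k) * D" unfolding l1norm_def by (simp add: infsum_cmult_left')
  also have "\<dots> = B * prod_list (map l1norm as) * l1norm x"
    unfolding D_def using prod_upd[of k as l1norm "as ! k"] len k by (simp add: mult_ac)
  finally show ?thesis .
qed

lemma Rop_cochain:
  fixes \<Phi> :: "('g::group_add) cochain"
  assumes p: "\<Phi> \<in> cochains I0mod n" and B: "cbound I0mod n \<Phi> B" and k: "k < n"
  shows "Rop h n k \<Phi> \<in> cochains I0mod n \<and> cbound I0mod n (Rop h n k \<Phi>) B"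
proof -
  have cb: "cbound I0mod n (Rop h n k \<Phi>) B"
    unfolding cbound_def carr_I0mod using Rop_bound[OF p B _ k] by blast
  have "Rop h n k \<Phi> \<in> cochains I0mod n"
  proof (rule cochI[OF _ _ _ cb])
    fix as :: "'g vec list" assume v: "valid n as"
    have a: "as ! k \<in> l1" using v k by (simp add: valid_nth)
    show "Rop h n k \<Phi> as \<in> dualset (carr I0mod)" unfolding carr_I0mod
    proof (rule dualI[where K="B * prod_list (map l1norm as)"])
      fix x y :: "'g vec" and c assume x: "x \<in> I0" and y: "y \<in> I0"
      have "Rop h n k \<Phi> as (vlin c x y) = (\<Sum>\<^sub>\<infinity>g. c * ((as ! k) g * \<Phi> (as[k := pt g]) (rt (h g) x)) + (as ! k) g * \<Phi> (as[k := pt g]) (rt (h g) y))"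
        unfolding Rop_def using v I0_vlin[OF x y]
        by (simp add: rt_vlin) (rule infsum_cong, simp add: dualD1[OF cochD1[OF p valid_upd[OF v pt_l1]], unfolded carr_I0mod] rt_I0 x y algebra_simps)
      also have "\<dots> = c * Rop h n k \<Phi> as x + Rop h n k \<Phi> as y"
        unfolding Rop_def using v x y
        by (simp only: if_True simp_thms) (rule lin_sum[OF abs_summable_summable[OF Fsum[OF p v k x a]] abs_summable_summable[OF Fsum[OF p v k y a]]])
      finally show "Rop h n k \<Phi> as (vlin c x y) = c * Rop h n k \<Phi> as x + Rop h n k \<Phi> as y" .
    next
      fix x :: "'g vec" assume "x \<in> I0" thus "norm (Rop h n k \<Phi> as x) \<le> B * prod_list (map l1norm as) * l1norm x"
        by (rule Rop_bound[OF p B v k])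
    next
      fix x :: "'g vec" assume "x \<notin> I0" thus "Rop h n k \<Phi> as x = 0" unfolding Rop_def by simp
    qed
  next
    fix as :: "'g vec list" assume "\<not> valid n as"
    thus "Rop h n k \<Phi> as = (\<lambda>_. 0)" unfolding Rop_def by (simp add: fun_eq_iff)
  next
    fix as :: "'g vec list" and i and a b :: "'g vec" and c
    assume v: "valid n as" and i: "i < n" and a: "a \<in> l1" and b: "b \<in> l1"
    have len: "length as = n" using v unfolding valid_def by simp
    have vv: "valid n (as[i := vlin c a b])" "valid n (as[i := a])" "valid n (as[i := b])"
      using valid_upd[OF v] a b vlin_l1[OF a b] by auto
    show "Rop h n k \<Phi> (as[i := vlin c a b]) = (\<lambda>x. c * Rop h n k \<Phi> (as[i := a]) x + Rop h n k \<Phi> (as[i := b]) x)"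
    proof (rule ext)
      fix x :: "'g vec" show "Rop h n k \<Phi> (as[i := vlin c a b]) x = c * Rop h n k \<Phi> (as[i := a]) x + Rop h n k \<Phi> (as[i := b]) x"
      proof (cases "x \<in> I0")
        case False thus ?thesis unfolding Rop_def by simp
      next
        case x: True
        show ?thesis
        proof (cases "i = k")
          case True
          have "Rop h n k \<Phi> (as[i := vlin c a b]) x = (\<Sum>\<^sub>\<infinity>g. c * (a g * \<Phi> (as[k := pt g]) (rt (h g) x)) + b g * \<Phi> (as[k := pt g]) (rt (h g) x))"
            unfolding Rop_def using vv x True len k by (simp add: vlin_def algebra_simps)
          also have "\<dots> = c * Rop h n k \<Phi> (as[i := a]) x + Rop h n k \<Phi> (as[i := b]) x"
            unfolding Rop_def using vv x True len k
            by (simp only: if_True simp_thms nth_list_update_eq list_update_overwrite)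
              (rule lin_sum[OF abs_summable_summable[OF Fsum[OF p v k x a]] abs_summable_summable[OF Fsum[OF p v k x b]]])
          finally show ?thesis .
        next
          case False
          have sw: "\<And>u g. (as[i := u])[k := pt g] = (as[k := pt g])[i := u]" using False by (rule list_update_swap)
          have nk: "\<And>u. (as[i := u]) ! k = as ! k" using False by simp
          have "Rop h n k \<Phi> (as[i := vlin c a b]) x = (\<Sum>\<^sub>\<infinity>g. c * (((as[i := a]) ! k) g * \<Phi> ((as[i := a])[k := pt g]) (rt (h g) x)) + ((as[i := b]) ! k) g * \<Phi> ((as[i := b])[k := pt g]) (rt (h g) x))"
            unfolding Rop_def using vv x
            by (simp only: if_True simp_thms nk sw) (rule infsum_cong, simp add: cochD3[OF p valid_upd[OF v pt_l1] i a b] algebra_simps)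
          also have "\<dots> = c * Rop h n k \<Phi> (as[i := a]) x + Rop h n k \<Phi> (as[i := b]) x"
            unfolding Rop_def using vv x
            by (simp only: if_True simp_thms)
              (rule lin_sum[OF abs_summable_summable[OF Fsum[OF p vv(2) k x valid_nth[OF vv(2) k]]] abs_summable_summable[OF Fsum[OF p vv(3) k x valid_nth[OF vv(3) k]]]])
          finally show ?thesis .
        qed
      qed
    qed
  qed
  with cb show ?thesis by blast
qed

lemma Rop_pt:
  assumes v: "valid n as" and k: "k < n" and e: "as ! k = pt g0" and x: "x \<in> I0"
  shows "Rop h n k \<Phi> as x = \<Phi> as (rt (h g0) x)"
proof -
  have "Rop h n k \<Phi> as x = (\<Sum>\<^sub>\<infinity>g. if g = g0 then \<Phi> (as[k := pt g]) (rt (h g) x) else 0)"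
    unfolding Rop_def using v x by (simp only: if_True simp_thms) (rule infsum_cong, simp add: e pt_def)
  also have "\<dots> = \<Phi> (as[k := pt g0]) (rt (h g0) x)" by (rule infsum_single_pt)
  also have "as[k := pt g0] = as" using list_update_id[of as k] e by simp
  finally show ?thesis .
qed




definition Rs :: "('g::group_add \<Rightarrow> 'g) \<Rightarrow> nat \<Rightarrow> nat list \<Rightarrow> 'g cochain \<Rightarrow> 'g cochain" where
  "Rs h n ks \<Phi> = foldr (\<lambda>k \<Psi>. Rop h n k \<Psi>) ks \<Phi>"

lemma Rs_Nil[simp]: "Rs h n [] \<Phi> = \<Phi>" unfolding Rs_def by simp
lemma Rs_Cons[simp]: "Rs h n (k # ks) \<Phi> = Rop h n k (Rs h n ks \<Phi>)" unfolding Rs_def by simp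

lemma Rs_cochain:
  assumes "\<Phi> \<in> cochains I0mod n" "cbound I0mod n \<Phi> B" "\<forall>k\<in>set ks. k < n"
  shows "Rs h n ks \<Phi> \<in> cochains I0mod n \<and> cbound I0mod n (Rs h n ks \<Phi>) B"
  using assms by (induction ks) (auto dest: Rop_cochain)

lemma valid_map_pt: "length gs = n \<Longrightarrow> valid n (map pt gs)"
  unfolding valid_def by (auto simp: pt_l1)

lemma Rs_pt:
  assumes "\<forall>k\<in>set ks. k < n" "length gs = n" "x \<in> I0"
  shows "Rs h n ks \<Phi> (map pt gs) x = \<Phi> (map pt gs) (rt (sum_list (map (\<lambda>k. h (gs ! k)) ks)) x)"
  using assms
proof (induction ks arbitrary: x)
  case Nil thus ?case by (simp add: rt_0)
next
  case (Cons k ks)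
  have "Rs h n (k # ks) \<Phi> (map pt gs) x = Rs h n ks \<Phi> (map pt gs) (rt (h (gs ! k)) x)"
    using Cons.prems by (simp add: Rop_pt valid_map_pt)
  also have "\<dots> = \<Phi> (map pt gs) (rt (sum_list (map (\<lambda>k. h (gs ! k)) ks)) (rt (h (gs ! k)) x))"
    using Cons by (simp add: rt_I0)
  finally show ?case by (simp add: rt_rt)
qed

definition Th :: "nat \<Rightarrow> ('g::group_add) cochain \<Rightarrow> 'g cochain" where
  "Th n \<psi> = Rs uminus n (rev [0..<n]) \<psi>"
definition Thi :: "nat \<Rightarrow> ('g::group_add) cochain \<Rightarrow> 'g cochain" where
  "Thi n \<psi> = Rs id n [0..<n] \<psi>"

lemma sum_neg_rev: "sum_list (rev (map uminus gs)) = - sum_list (gs :: ('g::group_add) list)"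
  by (induction gs) (auto simp: minus_add)

lemma Th_cochain: "\<psi> \<in> cochains I0mod n \<Longrightarrow> cbound I0mod n \<psi> B \<Longrightarrow>
    Th n \<psi> \<in> cochains I0mod n \<and> cbound I0mod n (Th n \<psi>) B"
  unfolding Th_def by (rule Rs_cochain) auto
lemma Thi_cochain: "\<psi> \<in> cochains I0mod n \<Longrightarrow> cbound I0mod n \<psi> B \<Longrightarrow>
    Thi n \<psi> \<in> cochains I0mod n \<and> cbound I0mod n (Thi n \<psi>) B"
  unfolding Thi_def by (rule Rs_cochain) auto
lemma Th_mem: "\<psi> \<in> cochains I0mod n \<Longrightarrow> Th n \<psi> \<in> cochains I0mod n"
  using Th_cochain cochD4 by blast
lemma Thi_mem: "\<psi> \<in> cochains I0mod n \<Longrightarrow> Thi n \<psi> \<in> cochains I0mod n"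
  using Thi_cochain cochD4 by blast

lemma Th_pt: "length gs = n \<Longrightarrow> x \<in> I0 \<Longrightarrow> Th n \<psi> (map pt gs) x = \<psi> (map pt gs) (rt (- sum_list gs) x)"
proof -
  assume l: "length gs = n" and x: "x \<in> I0"
  have m: "map (\<lambda>k. gs ! k) [0..<n] = gs" using map_nth[of gs] l by simp
  have "map (\<lambda>k. - (gs ! k)) (rev [0..<n]) = rev (map uminus (map (\<lambda>k. gs ! k) [0..<n]))"
    by (simp add: rev_map)
  hence "map (\<lambda>k. - (gs ! k)) (rev [0..<n]) = rev (map uminus gs)" by (simp only: m)
  hence "sum_list (map (\<lambda>k. - (gs ! k)) (rev [0..<n])) = - sum_list gs" by (simp add: sum_neg_rev)
  thus ?thesis unfolding Th_def using Rs_pt[of "rev [0..<n]" n gs x uminus \<psi>] l x by simp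
qed

lemma Thi_pt: "length gs = n \<Longrightarrow> x \<in> I0 \<Longrightarrow> Thi n \<psi> (map pt gs) x = \<psi> (map pt gs) (rt (sum_list gs) x)"
proof -
  assume l: "length gs = n" and x: "x \<in> I0"
  have "map (\<lambda>k. id (gs ! k)) [0..<n] = gs" using l map_nth[of gs] by simp
  thus ?thesis unfolding Thi_def using Rs_pt[of "[0..<n]" n gs x id \<psi>] l x by simp
qed

lemma eq_at_pt:
  assumes p: "\<Phi> \<in> cochains I0mod n" and q: "\<Psi> \<in> cochains I0mod n"
    and e: "\<And>gs x. length gs = n \<Longrightarrow> x \<in> I0 \<Longrightarrow> \<Phi> (map pt gs) x = \<Psi> (map pt gs) x"
  shows "\<Phi> = \<Psi>"
proof (rule cochain_eq[OF p q], intro allI impI ext)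
  fix gs :: "'a list" and x assume l: "length gs = n"
  show "\<Phi> (map pt gs) x = \<Psi> (map pt gs) x"
  proof (cases "x \<in> I0")
    case True thus ?thesis using e l by simp
  next
    case False thus ?thesis using dualD0[OF cochD1[OF p valid_map_pt[OF l]]] dualD0[OF cochD1[OF q valid_map_pt[OF l]]]
      by (simp add: carr_I0mod)
  qed
qed

lemma Th_inv1: "\<psi> \<in> cochains I0mod n \<Longrightarrow> Thi n (Th n \<psi>) = \<psi>"
  by (rule eq_at_pt[OF Thi_mem[OF Th_mem]]) (auto simp: Thi_pt Th_pt rt_I0 rt_rt rt_0)
lemma Th_inv2: "\<psi> \<in> cochains I0mod n \<Longrightarrow> Th n (Thi n \<psi>) = \<psi>"
  by (rule eq_at_pt[OF Th_mem[OF Thi_mem]]) (auto simp: Thi_pt Th_pt rt_I0 rt_rt rt_0)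

lemma Th_lin: "\<psi> \<in> cochains I0mod n \<Longrightarrow> \<xi> \<in> cochains I0mod n \<Longrightarrow> Th n (clin c \<psi> \<xi>) = clin c (Th n \<psi>) (Th n \<xi>)"
  by (rule eq_at_pt[OF Th_mem[OF clin_cochain] clin_cochain[OF Th_mem Th_mem]])
     (auto simp: Th_pt clin_def rt_I0)

lemma Th_bij: "bij_betw (Th n) (cochains I0mod n) (cochains I0mod n)"
  by (rule bij_betwI[where g="Thi n"]) (auto intro: Th_mem Thi_mem Th_inv1 Th_inv2)




definition mergeg :: "nat \<Rightarrow> 'g::group_add list \<Rightarrow> 'g list" where
  "mergeg i gs = take (i - 1) gs @ [gs ! (i - 1) + gs ! i] @ drop (i + 1) gs"

lemma merge_pt: "1 \<le> i \<Longrightarrow> i < length gs \<Longrightarrow> merge i (map pt gs) = map pt (mergeg i gs)"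
  unfolding merge_def mergeg_def by (simp add: take_map drop_map conv_pt_pt)

lemma length_mergeg: "1 \<le> i \<Longrightarrow> i < length gs \<Longrightarrow> length (mergeg i gs) = length gs - 1"
  unfolding mergeg_def by simp

lemma sum_mergeg: assumes "1 \<le> i" "i < length gs" shows "sum_list (mergeg i gs) = sum_list gs"
proof -
  have "sum_list gs = sum_list (take (i - 1) gs @ gs ! (i - 1) # gs ! i # drop (i + 1) gs)"
    using split3[OF assms] by simp
  thus ?thesis unfolding mergeg_def by (simp add: add.assoc)
qed

lemma twr_pt: "twr x (pt g) = x" unfolding twr_def by (simp add: aug_pt)

lemma Th_chain:
  fixes \<psi> :: "('g::group_add) cochain"
  assumes p: "\<psi> \<in> cochains I0mod n"
  shows "cobound I0tw n (Th n \<psi>) = Th (Suc n) (cobound I0mod n \<psi>)"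
proof (rule eq_at_pt)
  show "cobound I0tw n (Th n \<psi>) \<in> cochains I0mod (Suc n)"
    unfolding coch_eq_carr by (rule cobound_cochain[OF good_I0tw Th_mem[OF p, unfolded coch_eq_carr]])
  show "Th (Suc n) (cobound I0mod n \<psi>) \<in> cochains I0mod (Suc n)"
    by (rule Th_mem[OF cobound_cochain[OF good_I0mod p]])
next
  fix gs :: "'g list" and x :: "'g vec" assume l: "length gs = Suc n" and x: "x \<in> I0"
  define s where "s = sum_list gs"
  have ne: "gs \<noteq> []" using l by auto
  have v: "valid (Suc n) (map pt gs)" by (rule valid_map_pt[OF l])
  have rx: "rt (- s) x \<in> I0" using x by (rule rt_I0)
  have lt: "length (tl gs) = n" "length (butlast gs) = n" using l by auto
  have s1: "s = hd gs + sum_list (tl gs)" unfolding s_def using ne by (cases gs) auto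
  have s2: "s = sum_list (butlast gs) + last gs" unfolding s_def using ne
    by (metis append_butlast_last_id sum_list_append sum_list_simps(1) sum_list_simps(2) add_0_right)
  have A1: "dlact I0tw (hd (map pt gs)) (Th n \<psi> (tl (map pt gs))) x =
            dlact I0mod (hd (map pt gs)) (\<psi> (tl (map pt gs))) (rt (- s) x)"
  proof -
    have "dlact I0tw (hd (map pt gs)) (Th n \<psi> (tl (map pt gs))) x = \<psi> (map pt (tl gs)) (rt (- sum_list (tl gs)) x)"
      unfolding dlact_def carr_I0tw using x ne lt by (simp add: hd_map map_tl[symmetric] twr_pt I0tw_def Th_pt)
    also have "rt (- sum_list (tl gs)) x = rt (hd gs) (rt (- s) x)"
      unfolding rt_rt s1 by (simp add: minus_add add.assoc)
    finally show ?thesis unfolding dlact_def using rx ne by (simp add: I0mod_def hd_map map_tl[symmetric] conv_pt_right)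
  qed
  have A2: "\<And>i. i \<in> {1..n} \<Longrightarrow> Th n \<psi> (merge i (map pt gs)) x = \<psi> (merge i (map pt gs)) (rt (- s) x)"
  proof -
    fix i assume i: "i \<in> {1..n}"
    hence i': "1 \<le> i" "i < length gs" using l by auto
    show "Th n \<psi> (merge i (map pt gs)) x = \<psi> (merge i (map pt gs)) (rt (- s) x)"
      unfolding merge_pt[OF i'] s_def sum_mergeg[OF i', symmetric]
      by (rule Th_pt) (use i' l x length_mergeg[OF i'] in auto)
  qed
  have A3: "dract I0tw (Th n \<psi> (butlast (map pt gs))) (last (map pt gs)) x =
            dract I0mod (\<psi> (butlast (map pt gs))) (last (map pt gs)) (rt (- s) x)"
  proof -
    have tw: "twl (pt (last gs)) x \<in> I0" by (rule twl_I0[OF pt_l1 x])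
    have "dract I0tw (Th n \<psi> (butlast (map pt gs))) (last (map pt gs)) x =
          \<psi> (map pt (butlast gs)) (rt (- sum_list (butlast gs)) (twl (pt (last gs)) x))"
      unfolding dract_def carr_I0tw using x ne lt tw by (simp add: last_map map_butlast[symmetric] I0tw_def Th_pt)
    also have "rt (- sum_list (butlast gs)) (twl (pt (last gs)) x) = conv (pt (last gs)) (rt (- s) x)"
      unfolding twl_pt conv_pt_left rt_def s2 by (simp add: add.assoc)
    finally show ?thesis unfolding dract_def using rx ne by (simp add: I0mod_def last_map map_butlast[symmetric])
  qed
  have "cobound I0tw n (Th n \<psi>) (map pt gs) x =
      dlact I0tw (hd (map pt gs)) (Th n \<psi> (tl (map pt gs))) x
          + (\<Sum>i = 1..n. (-1) ^ i * Th n \<psi> (merge i (map pt gs)) x)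
          + (-1) ^ (Suc n) * dract I0tw (Th n \<psi> (butlast (map pt gs))) (last (map pt gs)) x"
    unfolding cobound_def using v by simp
  also have "\<dots> = dlact I0mod (hd (map pt gs)) (\<psi> (tl (map pt gs))) (rt (- s) x)
          + (\<Sum>i = 1..n. (-1) ^ i * \<psi> (merge i (map pt gs)) (rt (- s) x))
          + (-1) ^ (Suc n) * dract I0mod (\<psi> (butlast (map pt gs))) (last (map pt gs)) (rt (- s) x)"
    using A1 A2 A3 by simp
  also have "\<dots> = cobound I0mod n \<psi> (map pt gs) (rt (- s) x)"
    unfolding cobound_def using v by simp
  also have "\<dots> = Th (Suc n) (cobound I0mod n \<psi>) (map pt gs) x"
    unfolding s_def using Th_pt[OF l x] by simp
  finally show "cobound I0tw n (Th n \<psi>) (map pt gs) x = Th (Suc n) (cobound I0mod n \<psi>) (map pt gs) x" .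
qed




section \<open>transport along a bimodule isomorphism\<close>

lemma transport_cohom:
  fixes M N :: "('g::group_add) bimod" and U V :: "'g vec \<Rightarrow> 'g vec"
  assumes gM: "goodM M"
    and UN: "\<And>x. x \<in> carr M \<Longrightarrow> U x \<in> carr N" and VM: "\<And>y. y \<in> carr N \<Longrightarrow> V y \<in> carr M"
    and VU: "\<And>x. x \<in> carr M \<Longrightarrow> V (U x) = x" and UV: "\<And>y. y \<in> carr N \<Longrightarrow> U (V y) = y"
    and Ulin: "\<And>x y c. x \<in> carr M \<Longrightarrow> y \<in> carr M \<Longrightarrow> U (vlin c x y) = vlin c (U x) (U y)"
    and Vlin: "\<And>x y c. x \<in> carr N \<Longrightarrow> y \<in> carr N \<Longrightarrow> V (vlin c x y) = vlin c (V x) (V y)"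
    and Ub: "\<And>x. x \<in> carr M \<Longrightarrow> l1norm (U x) \<le> Kb * l1norm x" and Kb: "Kb \<ge> 0"
    and Vb: "\<And>y. y \<in> carr N \<Longrightarrow> l1norm (V y) \<le> Ka * l1norm y" and Ka: "Ka \<ge> 0"
    and Ul: "\<And>a x. a \<in> l1 \<Longrightarrow> x \<in> carr M \<Longrightarrow> U (lact M a x) = lact N a (U x)"
    and Ur: "\<And>a x. a \<in> l1 \<Longrightarrow> x \<in> carr M \<Longrightarrow> U (ract M x a) = ract N (U x) a"
    and vlN: "\<And>x y c. x \<in> carr N \<Longrightarrow> y \<in> carr N \<Longrightarrow> vlin c x y \<in> carr N"
    and vlM: "\<And>x y c. x \<in> carr M \<Longrightarrow> y \<in> carr M \<Longrightarrow> vlin c x y \<in> carr M"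
  shows "cohom_iso M N n"
proof -
  define Tr where "Tr = (\<lambda>(n::nat) (\<psi>::'g cochain) as y. if y \<in> carr N then \<psi> as (V y) else 0)"
  define Tr' where "Tr' = (\<lambda>(n::nat) (\<phi>::'g cochain) as x. if x \<in> carr M then \<phi> as (U x) else 0)"
  have lN: "\<And>(a::'g vec) y. a \<in> l1 \<Longrightarrow> y \<in> carr N \<Longrightarrow> lact N a y \<in> carr N \<and> V (lact N a y) = lact M a (V y)"
  proof -
    fix a y :: "'g vec" assume a: "a \<in> l1" and y: "y \<in> carr N"
    have e: "lact N a y = U (lact M a (V y))" using Ul[OF a VM[OF y]] UV[OF y] by simp
    show "lact N a y \<in> carr N \<and> V (lact N a y) = lact M a (V y)"
      unfolding e using UN VU goodD(3)[OF gM a VM[OF y]] by simp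
  qed
  have rN: "\<And>(a::'g vec) y. a \<in> l1 \<Longrightarrow> y \<in> carr N \<Longrightarrow> ract N y a \<in> carr N \<and> V (ract N y a) = ract M (V y) a"
  proof -
    fix a y :: "'g vec" assume a: "a \<in> l1" and y: "y \<in> carr N"
    have e: "ract N y a = U (ract M (V y) a)" using Ur[OF a VM[OF y]] UV[OF y] by simp
    show "ract N y a \<in> carr N \<and> V (ract N y a) = ract M (V y) a"
      unfolding e using UN VU goodD(4)[OF gM a VM[OF y]] by simp
  qed
  have Trc: "Tr n \<psi> \<in> cochains N n" if p: "\<psi> \<in> cochains M n" for n \<psi>
  proof -
    obtain K where K: "cbound M n \<psi> K" "K \<ge> 0" using cochD4'[OF p] by blast
    have bnd: "norm (Tr n \<psi> as y) \<le> (K * Ka) * prod_list (map l1norm as) * l1norm y"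
      if v: "valid n as" and y: "y \<in> carr N" for as y
    proof -
      have "norm (Tr n \<psi> as y) = norm (\<psi> as (V y))" unfolding Tr_def using y by simp
      also have "\<dots> \<le> K * prod_list (map l1norm as) * l1norm (V y)" by (rule cboundD[OF K(1) v VM[OF y]])
      also have "\<dots> \<le> K * prod_list (map l1norm as) * (Ka * l1norm y)"
        by (intro mult_left_mono Vb[OF y] mult_nonneg_nonneg K(2) prodnn)
      finally show ?thesis by (simp add: mult_ac)
    qed
    show ?thesis
    proof (rule cochI[where K="K * Ka"])
      fix as :: "'g vec list" assume v: "valid n as"
      show "Tr n \<psi> as \<in> dualset (carr N)"
      proof (rule dualI[where K="K * Ka * prod_list (map l1norm as)"])
        fix x y :: "'g vec" and c assume x: "x \<in> carr N" and y: "y \<in> carr N"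
        show "Tr n \<psi> as (vlin c x y) = c * Tr n \<psi> as x + Tr n \<psi> as y"
          unfolding Tr_def using x y vlN Vlin dualD1[OF cochD1[OF p v] VM[OF x] VM[OF y]] by simp
      next
        fix x :: "'g vec" assume "x \<in> carr N" thus "norm (Tr n \<psi> as x) \<le> K * Ka * prod_list (map l1norm as) * l1norm x"
          using bnd[OF v] by simp
      next
        fix x :: "'g vec" assume "x \<notin> carr N" thus "Tr n \<psi> as x = 0" unfolding Tr_def by simp
      qed
    next
      fix as :: "'g vec list" assume "\<not> valid n as" thus "Tr n \<psi> as = (\<lambda>_. 0)"
        unfolding Tr_def using cochD2[OF p] by (simp add: fun_eq_iff)
    next
      fix as :: "'g vec list" and i and a b :: "'g vec" and c
      assume "valid n as" "i < n" "a \<in> l1" "b \<in> l1"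
      thus "Tr n \<psi> (as[i := vlin c a b]) = (\<lambda>x. c * Tr n \<psi> (as[i := a]) x + Tr n \<psi> (as[i := b]) x)"
        unfolding Tr_def using cochD3[OF p] by (simp add: fun_eq_iff)
    next
      show "cbound N n (Tr n \<psi>) (K * Ka)" unfolding cbound_def using bnd by blast
    qed
  qed
  have Trc': "Tr' n \<phi> \<in> cochains M n" if p: "\<phi> \<in> cochains N n" for n \<phi>
  proof -
    obtain K where K: "cbound N n \<phi> K" "K \<ge> 0" using cochD4'[OF p] by blast
    have bnd: "norm (Tr' n \<phi> as y) \<le> (K * Kb) * prod_list (map l1norm as) * l1norm y"
      if v: "valid n as" and y: "y \<in> carr M" for as y
    proof -
      have "norm (Tr' n \<phi> as y) = norm (\<phi> as (U y))" unfolding Tr'_def using y by simp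
      also have "\<dots> \<le> K * prod_list (map l1norm as) * l1norm (U y)" by (rule cboundD[OF K(1) v UN[OF y]])
      also have "\<dots> \<le> K * prod_list (map l1norm as) * (Kb * l1norm y)"
        by (intro mult_left_mono Ub[OF y] mult_nonneg_nonneg K(2) prodnn)
      finally show ?thesis by (simp add: mult_ac)
    qed
    show ?thesis
    proof (rule cochI[where K="K * Kb"])
      fix as :: "'g vec list" assume v: "valid n as"
      show "Tr' n \<phi> as \<in> dualset (carr M)"
      proof (rule dualI[where K="K * Kb * prod_list (map l1norm as)"])
        fix x y :: "'g vec" and c assume x: "x \<in> carr M" and y: "y \<in> carr M"
        show "Tr' n \<phi> as (vlin c x y) = c * Tr' n \<phi> as x + Tr' n \<phi> as y"
          unfolding Tr'_def using x y vlM Ulin dualD1[OF cochD1[OF p v] UN[OF x] UN[OF y]] by simp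
      next
        fix x :: "'g vec" assume "x \<in> carr M" thus "norm (Tr' n \<phi> as x) \<le> K * Kb * prod_list (map l1norm as) * l1norm x"
          using bnd[OF v] by simp
      next
        fix x :: "'g vec" assume "x \<notin> carr M" thus "Tr' n \<phi> as x = 0" unfolding Tr'_def by simp
      qed
    next
      fix as :: "'g vec list" assume "\<not> valid n as" thus "Tr' n \<phi> as = (\<lambda>_. 0)"
        unfolding Tr'_def using cochD2[OF p] by (simp add: fun_eq_iff)
    next
      fix as :: "'g vec list" and i and a b :: "'g vec" and c
      assume "valid n as" "i < n" "a \<in> l1" "b \<in> l1"
      thus "Tr' n \<phi> (as[i := vlin c a b]) = (\<lambda>x. c * Tr' n \<phi> (as[i := a]) x + Tr' n \<phi> (as[i := b]) x)"
        unfolding Tr'_def using cochD3[OF p] by (simp add: fun_eq_iff)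
    next
      show "cbound M n (Tr' n \<phi>) (K * Kb)" unfolding cbound_def using bnd by blast
    qed
  qed
  have zero_off: "\<And>n (\<psi>::'g cochain) as x C. \<psi> \<in> cochains C n \<Longrightarrow> x \<notin> carr C \<Longrightarrow> \<psi> as x = 0"
    by (metis cochD1 cochD2 dualD0)
  have inv1: "Tr' n (Tr n \<psi>) = \<psi>" if p: "\<psi> \<in> cochains M n" for n \<psi>
    unfolding Tr_def Tr'_def using UN zero_off[OF p] by (auto simp: fun_eq_iff VU)
  have inv2: "Tr n (Tr' n \<phi>) = \<phi>" if p: "\<phi> \<in> cochains N n" for n \<phi>
    unfolding Tr_def Tr'_def using VM zero_off[OF p] by (auto simp: fun_eq_iff UV)
  show ?thesis
  proof (rule chain_iso_cohom[where \<Theta>=Tr])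
    fix n
    show "bij_betw (Tr n) (cochains M n) (cochains N n)"
      by (rule bij_betwI[where g="Tr' n"]) (auto intro: Trc Trc' inv1 inv2)
  next
    fix n \<psi> \<xi> c
    show "Tr n (clin c \<psi> \<xi>) = clin c (Tr n \<psi>) (Tr n \<xi>)" unfolding Tr_def clin_def by (simp add: fun_eq_iff)
  next
    fix n and \<psi> :: "'g cochain" assume p: "\<psi> \<in> cochains M n"
    show "cobound N n (Tr n \<psi>) = Tr (Suc n) (cobound M n \<psi>)"
    proof (intro ext)
      fix as :: "'g vec list" and y :: "'g vec"
      show "cobound N n (Tr n \<psi>) as y = Tr (Suc n) (cobound M n \<psi>) as y"
      proof (cases "valid (Suc n) as \<and> y \<in> carr N")
        case False thus ?thesis unfolding cobound_def Tr_def dlact_def dract_def by auto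
      next
        case True
        hence v: "valid (Suc n) as" and y: "y \<in> carr N" by auto
        have h: "hd as \<in> l1" "last as \<in> l1" using valid_hd[OF v] valid_last[OF v] by auto
        show ?thesis unfolding cobound_def Tr_def dlact_def dract_def
          using v y VM[OF y] rN[OF h(1) y] lN[OF h(2) y] by simp
      qed
    qed
  next
    fix n \<psi> assume "\<psi> \<in> cochains M n" thus "cobound M n \<psi> \<in> cochains M (Suc n)" by (rule cobound_cochain[OF gM])
  qed
qed

section \<open>I0tw vs l1(S)\<close>

definition Uo :: "('g::group_add) vec \<Rightarrow> 'g vec" where "Uo x = x(0 := 0)"
definition Vo :: "('g::group_add) vec \<Rightarrow> 'g vec" where "Vo f = f(0 := - aug f)"

lemma Uo_vlin: "Uo x = vlin (- x 0) (pt 0) x" unfolding Uo_def vlin_def pt_def by auto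
lemma Uo_l1: "x \<in> l1 \<Longrightarrow> Uo x \<in> l1" unfolding Uo_vlin by (intro vlin_l1 pt_l1)
lemma x_split: "x = vlin (x 0) (pt 0) (Uo x)" unfolding Uo_def vlin_def pt_def by auto
lemma aug_split: "x \<in> l1 \<Longrightarrow> aug x = x 0 + aug (Uo x)"
  by (subst x_split) (simp add: aug_vlin pt_l1 Uo_l1 aug_pt)

lemma Vo_vlin: "f 0 = 0 \<Longrightarrow> Vo f = vlin (- aug f) (pt 0) f" unfolding Vo_def vlin_def pt_def by auto

lemma conj_zero: "(- g + h + g = (0::'g::group_add)) \<longleftrightarrow> h = 0"
  by (metis add.assoc add.left_inverse add_minus_cancel add_0_right minus_add_cancel)

lemma vlS: "x \<in> l1S_set \<Longrightarrow> y \<in> l1S_set \<Longrightarrow> vlin c x y \<in> l1S_set"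
  using vlin_l1[of x y c] by (auto simp: l1S_set_def vlin_def)

lemma l1S_I0: "bimod_iso (I0tw :: ('g::group_add) bimod) l1Smod \<and> cohom_iso (I0tw :: 'g bimod) l1Smod n"
proof -
  have UN: "\<And>x::'g vec. x \<in> I0 \<Longrightarrow> Uo x \<in> l1S_set"
  proof -
    fix x :: "'g vec" assume x: "x \<in> I0"
    have "Uo x \<in> l1" by (rule Uo_l1[OF I0_l1[OF x]])
    moreover have "Uo x 0 = 0" by (simp add: Uo_def)
    ultimately show "Uo x \<in> l1S_set" unfolding l1S_set_def by simp
  qed
  have VM: "\<And>f::'g vec. f \<in> l1S_set \<Longrightarrow> Vo f \<in> (I0 :: 'g vec set)"
  proof -
    fix f :: "'g vec" assume f: "f \<in> l1S_set"
    hence f1: "f \<in> l1" "f 0 = 0" unfolding l1S_set_def by auto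
    have "Vo f \<in> l1" using f1 by (simp add: Vo_vlin vlin_l1 pt_l1)
    moreover have "aug (Vo f) = 0" using f1 by (simp add: Vo_vlin aug_vlin pt_l1 aug_pt)
    ultimately show "Vo f \<in> I0" by (rule I0I)
  qed
  have VU: "\<And>x::'g vec. x \<in> I0 \<Longrightarrow> Vo (Uo x) = x"
  proof -
    fix x :: "'g vec" assume x: "x \<in> I0"
    have "x 0 = - aug (Uo x)" using aug_split[OF I0_l1[OF x]] I0_aug[OF x] by (simp add: eq_neg_iff_add_eq_0 add.commute)
    thus "Vo (Uo x) = x" unfolding Vo_def Uo_def by auto
  qed
  have UV: "\<And>f::'g vec. f \<in> l1S_set \<Longrightarrow> Uo (Vo f) = f" unfolding l1S_set_def Uo_def Vo_def by auto
  have Ulin: "\<And>(x::'g vec) y c. Uo (vlin c x y) = vlin c (Uo x) (Uo y)" unfolding Uo_def vlin_def by auto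
  have Vlin: "\<And>(x::'g vec) y c. x \<in> l1S_set \<Longrightarrow> y \<in> l1S_set \<Longrightarrow> Vo (vlin c x y) = vlin c (Vo x) (Vo y)"
  proof -
    fix x y :: "'g vec" and c assume "x \<in> l1S_set" "y \<in> l1S_set"
    hence h: "x \<in> l1" "x 0 = 0" "y \<in> l1" "y 0 = 0" unfolding l1S_set_def by auto
    have e: "aug (vlin c x y) = c * aug x + aug y" by (rule aug_vlin[OF h(1,3)])
    show "Vo (vlin c x y) = vlin c (Vo x) (Vo y)" unfolding Vo_def e using h
      by (auto simp: vlin_def fun_eq_iff)
  qed
  have Ub: "\<And>x::'g vec. x \<in> I0 \<Longrightarrow> l1norm (Uo x) \<le> 1 * l1norm x"
  proof -
    fix x :: "'g vec" assume x: "x \<in> I0"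
    show "l1norm (Uo x) \<le> 1 * l1norm x" unfolding l1norm_def
      using Uo_l1[OF I0_l1[OF x]] I0_l1[OF x] unfolding l1_def
      by simp (rule infsum_mono, auto simp: Uo_def)
  qed
  have Vb: "\<And>f::'g vec. f \<in> l1S_set \<Longrightarrow> l1norm (Vo f) \<le> 2 * l1norm f"
  proof -
    fix f :: "'g vec" assume f: "f \<in> l1S_set"
    hence f1: "f \<in> l1" "f 0 = 0" unfolding l1S_set_def by auto
    have "l1norm (Vo f) \<le> norm (- aug f) * l1norm (pt (0::'g)) + l1norm f"
      unfolding Vo_vlin[of f, OF f1(2)] by (intro l1norm_vlin pt_l1 f1(1))
    also have "\<dots> \<le> 2 * l1norm f" using norm_aug[OF f1(1)] by (simp add: l1norm_pt)
    finally show "l1norm (Vo f) \<le> 2 * l1norm f" .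
  qed
  have Ul: "\<And>(a::'g vec) x. a \<in> l1 \<Longrightarrow> x \<in> I0 \<Longrightarrow> Uo (twl a x) = twl a (Uo x)"
  proof -
    fix a x :: "'g vec"
    show "Uo (twl a x) = twl a (Uo x)"
    proof
      fix h :: 'g
      show "Uo (twl a x) h = twl a (Uo x) h"
        unfolding Uo_def twl_def by (cases "h = 0") (auto simp: conj_zero)
    qed
  qed
  have Ur: "\<And>(a::'g vec) x. twr (Uo x) a = Uo (twr x a)" unfolding Uo_def twr_def by auto
  have bi: "bimod_iso (I0tw :: 'g bimod) l1Smod" unfolding bimod_iso_def I0tw_def l1Smod_def bimod.simps
  proof (intro exI[of _ Uo] conjI ballI allI)
    show "bij_betw Uo (I0::'g vec set) l1S_set" by (rule bij_betwI[where g=Vo]) (use UN VM VU UV in auto)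
    show "\<exists>K. \<forall>x\<in>(I0::'g vec set). l1norm (Uo x) \<le> K * l1norm x" using Ub by blast
    show "\<exists>K. \<forall>x\<in>(I0::'g vec set). l1norm x \<le> K * l1norm (Uo x)"
    proof (intro exI ballI)
      fix x :: "'g vec" assume x: "x \<in> I0"
      have "l1norm x = l1norm (Vo (Uo x))" using VU[OF x] by simp
      also have "\<dots> \<le> 2 * l1norm (Uo x)" by (rule Vb[OF UN[OF x]])
      finally show "l1norm x \<le> 2 * l1norm (Uo x)" .
    qed
  qed (auto simp: Ulin Ul Ur)
  have ci: "cohom_iso (I0tw :: 'g bimod) l1Smod n"
    by (rule transport_cohom[where U=Uo and V=Vo and Ka=2 and Kb=1, OF good_I0tw])
      (auto simp: I0tw_def l1Smod_def UN VM VU UV Ulin Vlin Ub[simplified] Vb Ul Ur[symmetric] I0_vlin vlS)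
  show ?thesis using bi ci by blast
qed




theorem mainTheorem4:
  shows "(\<exists>\<Theta> :: nat \<Rightarrow> ('g::group_add) cochain \<Rightarrow> 'g cochain. \<forall>n.
            bij_betw (\<Theta> n) (cochains I0mod n) (cochains I0tw n) \<and>
            (\<forall>\<psi>\<in>cochains I0mod n. \<forall>\<xi>\<in>cochains I0mod n. \<forall>c.
                \<Theta> n (clin c \<psi> \<xi>) = clin c (\<Theta> n \<psi>) (\<Theta> n \<xi>)) \<and>
            (\<exists>K. \<forall>\<psi>\<in>cochains I0mod n. \<forall>B.
                cbound I0mod n \<psi> B \<longrightarrow> cbound I0tw n (\<Theta> n \<psi>) (K * B)) \<and>
            (\<exists>K. \<forall>\<psi>\<in>cochains I0mod n. \<forall>B.
                cbound I0tw n (\<Theta> n \<psi>) B \<longrightarrow> cbound I0mod n \<psi> (K * B)) \<and>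
            (\<forall>\<psi>\<in>cochains I0mod n. \<forall>gs. length gs = n \<longrightarrow>
                \<Theta> n \<psi> (map pt gs) = dlact I0mod (pt (- sum_list gs)) (\<psi> (map pt gs))) \<and>
            (\<forall>\<psi>\<in>cochains I0mod n.
                cobound I0tw n (\<Theta> n \<psi>) = \<Theta> (Suc n) (cobound I0mod n \<psi>)))
       \<and> (\<forall>n. cohom_iso (I0mod :: 'g bimod) I0tw n)
       \<and> bimod_iso (I0tw :: 'g bimod) l1Smod
       \<and> (\<forall>n. cohom_iso (I0mod :: 'g bimod) l1Smod n)"
proof (intro conjI)
  show "\<exists>\<Theta> :: nat \<Rightarrow> ('g::group_add) cochain \<Rightarrow> 'g cochain. \<forall>n.
            bij_betw (\<Theta> n) (cochains I0mod n) (cochains I0tw n) \<and>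
            (\<forall>\<psi>\<in>cochains I0mod n. \<forall>\<xi>\<in>cochains I0mod n. \<forall>c.
                \<Theta> n (clin c \<psi> \<xi>) = clin c (\<Theta> n \<psi>) (\<Theta> n \<xi>)) \<and>
            (\<exists>K. \<forall>\<psi>\<in>cochains I0mod n. \<forall>B.
                cbound I0mod n \<psi> B \<longrightarrow> cbound I0tw n (\<Theta> n \<psi>) (K * B)) \<and>
            (\<exists>K. \<forall>\<psi>\<in>cochains I0mod n. \<forall>B.
                cbound I0tw n (\<Theta> n \<psi>) B \<longrightarrow> cbound I0mod n \<psi> (K * B)) \<and>
            (\<forall>\<psi>\<in>cochains I0mod n. \<forall>gs. length gs = n \<longrightarrow>
                \<Theta> n \<psi> (map pt gs) = dlact I0mod (pt (- sum_list gs)) (\<psi> (map pt gs))) \<and>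
            (\<forall>\<psi>\<in>cochains I0mod n.
                cobound I0tw n (\<Theta> n \<psi>) = \<Theta> (Suc n) (cobound I0mod n \<psi>))"
  proof (intro exI[of _ Th] allI conjI ballI impI)
    fix n
    show "bij_betw (Th n) (cochains I0mod n) (cochains I0tw n)"
      using Th_bij unfolding coch_eq_carr .
    fix \<psi> \<xi> :: "'g cochain" and c assume "\<psi> \<in> cochains I0mod n" "\<xi> \<in> cochains I0mod n"
    thus "Th n (clin c \<psi> \<xi>) = clin c (Th n \<psi>) (Th n \<xi>)" by (rule Th_lin)
  next
    fix n
    show "\<exists>K. \<forall>\<psi>\<in>cochains (I0mod::'g bimod) n. \<forall>B. cbound I0mod n \<psi> B \<longrightarrow> cbound I0tw n (Th n \<psi>) (K * B)"
      by (rule exI[of _ 1]) (auto simp: Th_cochain cbound_eq_carr[symmetric])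
  next
    fix n
    show "\<exists>K. \<forall>\<psi>\<in>cochains (I0mod::'g bimod) n. \<forall>B. cbound I0tw n (Th n \<psi>) B \<longrightarrow> cbound I0mod n \<psi> (K * B)"
    proof (intro exI[of _ 1] ballI allI impI)
      fix \<psi> :: "'g cochain" and B assume p: "\<psi> \<in> cochains I0mod n" and b: "cbound I0tw n (Th n \<psi>) B"
      have "cbound I0mod n (Thi n (Th n \<psi>)) B"
        using Thi_cochain[OF Th_mem[OF p]] b unfolding cbound_eq_carr by blast
      thus "cbound I0mod n \<psi> (1 * B)" using Th_inv1[OF p] by simp
    qed
  next
    fix n and \<psi> :: "'g cochain" and gs :: "'g list" assume p: "\<psi> \<in> cochains I0mod n" and l: "length gs = n"
    show "Th n \<psi> (map pt gs) = dlact I0mod (pt (- sum_list gs)) (\<psi> (map pt gs))"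
    proof
      fix x :: "'g vec"
      show "Th n \<psi> (map pt gs) x = dlact I0mod (pt (- sum_list gs)) (\<psi> (map pt gs)) x"
      proof (cases "x \<in> I0")
        case True thus ?thesis unfolding dlact_def carr_I0mod using Th_pt[OF l True]
          by (simp add: I0mod_def conv_pt_right)
      next
        case False thus ?thesis unfolding dlact_def carr_I0mod
          using dualD0[OF cochD1[OF Th_mem[OF p] valid_map_pt[OF l]]] by (simp add: carr_I0mod)
      qed
    qed
  next
    fix n and \<psi> :: "'g cochain" assume "\<psi> \<in> cochains I0mod n"
    thus "cobound I0tw n (Th n \<psi>) = Th (Suc n) (cobound I0mod n \<psi>)" by (rule Th_chain)
  qed
  have ci1: "\<And>n. cohom_iso (I0mod :: 'g bimod) I0tw n"
  proof (rule chain_iso_cohom[where \<Theta>=Th])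
    fix n
    show "bij_betw (Th n) (cochains I0mod n) (cochains I0tw n)" using Th_bij unfolding coch_eq_carr .
  next
    fix n and \<psi> \<xi> :: "'g cochain" and c assume "\<psi> \<in> cochains (I0mod::'g bimod) n" "\<xi> \<in> cochains I0mod n"
    thus "Th n (clin c \<psi> \<xi>) = clin c (Th n \<psi>) (Th n \<xi>)" by (rule Th_lin)
  next
    fix n and \<psi> :: "'g cochain" assume "\<psi> \<in> cochains (I0mod::'g bimod) n"
    thus "cobound I0tw n (Th n \<psi>) = Th (Suc n) (cobound I0mod n \<psi>)" by (rule Th_chain)
  next
    fix n and \<psi> :: "'g cochain" assume "\<psi> \<in> cochains (I0mod::'g bimod) n"
    thus "cobound I0mod n \<psi> \<in> cochains I0mod (Suc n)" by (rule cobound_cochain[OF good_I0mod])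
  qed
  show "\<forall>n. cohom_iso (I0mod :: 'g bimod) I0tw n" using ci1 by blast
  show "bimod_iso (I0tw :: 'g bimod) l1Smod" using l1S_I0 by blast
  show "\<forall>n. cohom_iso (I0mod :: 'g bimod) l1Smod n"
    using ci1 l1S_I0 cohom_iso_trans by blast
qed


end
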